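(* Let $\mu\in\mathcal P_2(\mathbb R^d)$, $\psi\in T_\mu(\mathcal P_2(\mathbb R^d))$ and $\eta\in\mathcal P(C([0,1],\mathbb R^d))$ with $(e_0)_\#\eta=\mu$. Assume that at least one of the following holds: (1) $\psi$ is of the form $x\mapsto\delta_{v(x)}$ for some measurable $v\in L^2_\mu(\mathbb R^d,\mathbb R^d)$; (2) there exists $f\in L^\infty_t(W^{1,\infty}(\mathbb R^d,\mathbb R^d))$ (i.e. $f:[0,1]\times\mathbb R^d\to\mathbb R^d$ bounded and Lipschitz in $x$, uniformly in $t$) such that $\eta$ is concentrated on curves $\theta$ solving $\theta'(t)=f(t,\theta(t))$. Then there exists a unique parallel transport of $\psi$ along $\eta$.
   Context: $\mathcal P(O)$ denotes Borel probability measures on $O$; $\mathcal P_2(\mathbb R^d)$ those on $\mathbb R^d$ with finite second moment; $f_\#m$ is the image measure. $T_\mu(\mathcal P_2(\mathbb R^d))$ is the set of measurable maps $\psi:\mathbb R^d\to\mathcal P(\mathbb R^d)$, $x\mapsto\psi_x$, with $\int\int|z|^2\psi_x(dz)\mu(dx)<\infty$. For $t\in[0,1]$, $e_t$ is the evaluation map $w\mapsto w(t)$ on spaces of continuous curves. $\pi_1,\pi_2$ are the projections of $\mathbb R^d\times\mathbb R^d$. Let $p_1:C([0,1],\mathbb R^{2d})\to C([0,1],\mathbb R^d)$, $p_1(w)(t)=\pi_1(w(t))$; let $C^1_y([0,1],\mathbb R^{2d})$ be the set of continuous curves $w$ with $t\mapsto\pi_2(w(t))$ of class $C^1$, and on it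 $\partial_2(w)(t)=\frac{d}{dt}\pi_2(w(t))$. A parallel transport of $\psi\in T_\mu(\mathcal P_2(\mathbb R^d))$ along $\eta$ (with $(e_0)_\#\eta=\mu$) is a probability measure $\Psi$ on $C([0,1],\mathbb R^{2d})$ concentrated on $C^1_y([0,1],\mathbb R^{2d})$ such that $(p_1)_\#\Psi=\eta$, $(\partial_2)_\#\Psi=\delta_0$ (Dirac mass at the zero curve), and $(e_0)_\#\Psi(dx,dz)=\mu(dx)\psi_x(dz)$. *)

theory Defs
  imports "HOL-Probability.Probability"
begin

text \<open>Continuous curves on [0,1], represented as functions on the reals that are
  continuous on [0,1] and extended constantly outside [0,1] (so each element of
  C([0,1],X) has exactly one representative).\<close>

definition clamp01 :: "real \<Rightarrow> real" where
  "clamp01 t = max 0 (min 1 t)"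

definition Cpaths :: "(real \<Rightarrow> 'b::metric_space) set" where
  "Cpaths = {w. continuous_on {0..1} w \<and> (\<forall>t. w t = w (clamp01 t))}"

definition sup_dist :: "(real \<Rightarrow> 'b::metric_space) \<Rightarrow> (real \<Rightarrow> 'b) \<Rightarrow> real" where
  "sup_dist w w' = (SUP t\<in>{0..1}. dist (w t) (w' t))"

definition Copen :: "(real \<Rightarrow> 'b::metric_space) set set" where
  "Copen = {U. U \<subseteq> Cpaths \<and>
     (\<forall>w\<in>U. \<exists>e>0. \<forall>w'\<in>Cpaths. sup_dist w w' < e \<longrightarrow> w' \<in> U)}"

definition Cborel :: "(real \<Rightarrow> 'b::metric_space) measure" where
  "Cborel = sigma Cpaths Copen"

definition ev :: "real \<Rightarrow> (real \<Rightarrow> 'b) \<Rightarrow> 'b" where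
  "ev t w = w t"

definition is_prob :: "'a::topological_space measure \<Rightarrow> bool" where
  "is_prob M \<longleftrightarrow> prob_space M \<and> sets M = sets borel"

definition P2 :: "'a::euclidean_space measure \<Rightarrow> bool" where
  "P2 M \<longleftrightarrow> is_prob M \<and> (\<integral>\<^sup>+ x. ennreal ((norm x)\<^sup>2) \<partial>M) < \<infinity>"

definition is_path_prob :: "(real \<Rightarrow> 'b::metric_space) measure \<Rightarrow> bool" where
  "is_path_prob M \<longleftrightarrow> prob_space M \<and> sets M = sets Cborel \<and> space M = Cpaths"

definition Tmu :: "'a::euclidean_space measure \<Rightarrow> ('a \<Rightarrow> 'a measure) set" where
  "Tmu \<mu> = {\<psi>. \<psi> \<in> measurable borel (prob_algebra borel) \<and>
      (\<integral>\<^sup>+ x. (\<integral>\<^sup>+ z. ennreal ((norm z)\<^sup>2) \<partial>(\<psi> x)) \<partial>\<mu>) < \<infinity>}"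

definition joint :: "'a::euclidean_space measure \<Rightarrow> ('a \<Rightarrow> 'a measure) \<Rightarrow> ('a \<times> 'a) measure" where
  "joint \<mu> \<psi> = bind \<mu> (\<lambda>x. distr (\<psi> x) borel (\<lambda>z. (x, z)))"

definition p1 :: "(real \<Rightarrow> 'a \<times> 'a) \<Rightarrow> (real \<Rightarrow> 'a)" where
  "p1 w = (\<lambda>t. fst (w t))"

definition C1y :: "(real \<Rightarrow> 'a::euclidean_space \<times> 'a) set" where
  "C1y = {w \<in> Cpaths. \<exists>g. continuous_on {0..1} g \<and>
      (\<forall>t\<in>{0..1}. ((\<lambda>s. snd (w s)) has_vector_derivative g t) (at t within {0..1}))}"

text \<open>partial_2 on C^1_y (derivative of the second component, as an element of
  C([0,1],R^d)); outside C^1_y (a null set for the measures considered) it is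
  given an irrelevant value.\<close>
definition d2 :: "(real \<Rightarrow> 'a::euclidean_space \<times> 'a) \<Rightarrow> (real \<Rightarrow> 'a)" where
  "d2 w = (if w \<in> C1y
     then (\<lambda>t. vector_derivative (\<lambda>s. snd (w s)) (at (clamp01 t) within {0..1}))
     else (\<lambda>t. 0))"

definition parallel_transport ::
  "'a::euclidean_space measure \<Rightarrow> ('a \<Rightarrow> 'a measure) \<Rightarrow> (real \<Rightarrow> 'a) measure
     \<Rightarrow> (real \<Rightarrow> 'a \<times> 'a) measure \<Rightarrow> bool" where
  "parallel_transport \<mu> \<psi> \<eta> \<Psi> \<longleftrightarrow>
     is_path_prob \<Psi> \<and>
     (AE w in \<Psi>. w \<in> C1y) \<and>
     distr \<Psi> Cborel p1 = \<eta> \<and>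
     distr \<Psi> Cborel d2 = return Cborel (\<lambda>t. 0) \<and>
     distr \<Psi> borel (ev 0) = joint \<mu> \<psi>"

end

theory Submission
  imports Defs
begin

lemma clamp01_in: "clamp01 t \<in> {0..1}"
  by (auto simp: clamp01_def)

lemma clamp01_id: "t \<in> {0..1} \<Longrightarrow> clamp01 t = t"
  by (auto simp: clamp01_def)

lemma Cpaths_clamp: "w \<in> Cpaths \<Longrightarrow> w t = w (clamp01 t)"
  by (auto simp: Cpaths_def)

lemma Cpaths_cont: "w \<in> Cpaths \<Longrightarrow> continuous_on {0..1} w"
  by (auto simp: Cpaths_def)

lemma Cpaths_bdd:
  assumes "w \<in> Cpaths" "w' \<in> Cpaths"
  shows "bdd_above ((\<lambda>t. dist (w t) (w' t)) ` {0..1})"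
proof -
  have "continuous_on {0..1} (\<lambda>t. dist (w t) (w' t))"
    using assms by (intro continuous_intros) (auto simp: Cpaths_def)
  then have "compact ((\<lambda>t. dist (w t) (w' t)) ` {0..1})"
    by (intro compact_continuous_image) auto
  then show ?thesis by (intro bounded_imp_bdd_above compact_imp_bounded)
qed

lemma dist_le_sup_dist:
  assumes "w \<in> Cpaths" "w' \<in> Cpaths"
  shows "dist (w t) (w' t) \<le> sup_dist w w'"
proof -
  have "dist (w t) (w' t) = dist (w (clamp01 t)) (w' (clamp01 t))"
    using assms Cpaths_clamp by metis
  also have "\<dots> \<le> sup_dist w w'"
    unfolding sup_dist_def using Cpaths_bdd[OF assms] clamp01_in
    by (intro cSUP_upper) auto
  finally show ?thesis .
qed

lemma sup_dist_le:
  assumes "\<And>t. t \<in> {0..1} \<Longrightarrow> dist (w t) (w' t) \<le> r"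
  shows "sup_dist w w' \<le> r"
  unfolding sup_dist_def using assms by (intro cSUP_least) auto

lemma Copen_sub: "Copen \<subseteq> Pow Cpaths"
  by (auto simp: Copen_def)

lemma space_Cborel: "space Cborel = Cpaths"
  unfolding Cborel_def using Copen_sub by (rule space_measure_of)

lemma sets_Cborel: "sets Cborel = sigma_sets Cpaths Copen"
  unfolding Cborel_def using Copen_sub by (rule sets_measure_of)

lemma Copen_in_Cborel: "U \<in> Copen \<Longrightarrow> U \<in> sets Cborel"
  unfolding sets_Cborel by auto

lemma openI_Cborel:
  assumes "U \<subseteq> Cpaths" "\<And>w. w \<in> U \<Longrightarrow> \<exists>e>0. \<forall>w'\<in>Cpaths. sup_dist w w' < e \<longrightarrow> w' \<in> U"
  shows "U \<in> sets Cborel"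
  using assms by (intro Copen_in_Cborel) (auto simp: Copen_def)

lemma closedI_Cborel:
  assumes "U \<subseteq> Cpaths" "\<And>w. w \<in> Cpaths \<Longrightarrow> w \<notin> U \<Longrightarrow> \<exists>e>0. \<forall>w'\<in>Cpaths. sup_dist w w' < e \<longrightarrow> w' \<notin> U"
  shows "U \<in> sets Cborel"
proof -
  have "Cpaths - U \<in> sets Cborel"
    using assms by (intro openI_Cborel) auto
  then have "space Cborel - (Cpaths - U) \<in> sets Cborel" by auto
  moreover have "space Cborel - (Cpaths - U) = U" using assms(1) space_Cborel by auto
  ultimately show ?thesis by simp
qed

lemma ev_measurable: "(ev t :: (real \<Rightarrow> 'b::metric_space) \<Rightarrow> 'b) \<in> borel_measurable Cborel"
proof (rule borel_measurableI)
  fix S :: "'b set" assume "open S"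
  show "ev t -` S \<inter> space Cborel \<in> sets Cborel"
  proof (rule openI_Cborel)
    fix w assume w: "w \<in> ev t -` S \<inter> space Cborel"
    then obtain e where e: "e > 0" "ball (w t) e \<subseteq> S"
      using \<open>open S\<close> by (auto simp: ev_def open_contains_ball)
    show "\<exists>e>0. \<forall>w'\<in>Cpaths. sup_dist w w' < e \<longrightarrow> w' \<in> ev t -` S \<inter> space Cborel"
    proof (intro exI[of _ e] conjI ballI impI)
      fix w' assume "w' \<in> Cpaths" "sup_dist w w' < e"
      then have "dist (w t) (w' t) < e"
        using dist_le_sup_dist[of w w' t] w space_Cborel by fastforce
      then show "w' \<in> ev t -` S \<inter> space Cborel"
        using e \<open>w' \<in> Cpaths\<close> space_Cborel by (auto simp: ev_def)
    qed fact
  qed (auto simp: space_Cborel)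
qed

lemma ev_measurable'[measurable]: "(\<lambda>w. w t) \<in> borel_measurable Cborel"
  using ev_measurable[of t] by (simp add: ev_def[abs_def])

definition hatf :: "nat \<Rightarrow> nat \<Rightarrow> real \<Rightarrow> real" where
  "hatf n k t = max 0 (1 - \<bar>real n * t - real k\<bar>)"

definition plin :: "nat \<Rightarrow> 'b::real_normed_vector list \<Rightarrow> real \<Rightarrow> 'b" where
  "plin n ys t = (1 / (\<Sum>k\<le>n. hatf n k t)) *\<^sub>R (\<Sum>k\<le>n. hatf n k t *\<^sub>R ys ! k)"

lemma hatf_nonneg: "hatf n k t \<ge> 0"
  by (simp add: hatf_def)

lemma hatf_sum_pos:
  assumes "t \<in> {0..1}"
  shows "(\<Sum>k\<le>n. hatf n k t) > 0"
proof -
  define k where "k = nat \<lfloor>real n * t\<rfloor>"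
  have nt: "real n * t \<ge> 0" "real n * t \<le> real n" using assms
    using mult_left_le[of t "real n"] by auto
  have "\<lfloor>real n * t\<rfloor> \<le> int n" using nt(2) by (simp add: floor_le_iff)
  then have kn: "k \<le> n" unfolding k_def by (simp add: nat_le_iff)
  have "real k = of_int \<lfloor>real n * t\<rfloor>" using nt unfolding k_def by simp
  then have "real k \<le> real n * t" "real n * t < real k + 1"
    by linarith+
  then have "hatf n k t > 0" by (simp add: hatf_def)
  moreover have "hatf n k t \<le> (\<Sum>k\<le>n. hatf n k t)"
    using kn by (intro member_le_sum) (auto simp: hatf_nonneg)
  ultimately show ?thesis by linarith
qed

lemma continuous_on_plin: "continuous_on {0..1} (plin n ys)"
proof -
  have "\<And>x. x \<in> {0..1} \<Longrightarrow> (\<Sum>k\<le>n. hatf n k x) \<noteq> 0"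
    using hatf_sum_pos by (metis less_irrefl)
  then show ?thesis
    unfolding plin_def hatf_def by (intro continuous_intros) (auto simp: hatf_def)
qed

lemma rat_dense01:
  assumes "t \<in> {0..1::real}" "d > 0"
  shows "\<exists>q\<in>\<rat>. q \<in> {0..1} \<and> \<bar>q - t\<bar> < d"
proof (cases "t < 1")
  case True
  then obtain q where "q \<in> \<rat>" "t < q" "q < min 1 (t + d)"
    using Rats_dense_in_real[of t "min 1 (t+d)"] assms by auto
  then show ?thesis using assms by (intro bexI[of _ q]) auto
next
  case False
  then show ?thesis using assms by (intro bexI[of _ 1]) auto
qed

lemma rat_extend_le:
  fixes g :: "real \<Rightarrow> real"
  assumes "continuous_on {0..1} g" "\<And>q. q \<in> \<rat> \<Longrightarrow> q \<in> {0..1} \<Longrightarrow> g q \<le> r" "t \<in> {0..1}"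
  shows "g t \<le> r"
proof (rule ccontr)
  assume "\<not> g t \<le> r"
  then have "g t - r > 0" by simp
  then obtain d where d: "d > 0" "\<And>s. s \<in> {0..1} \<Longrightarrow> dist s t < d \<Longrightarrow> dist (g s) (g t) < g t - r"
    using assms(1,3) unfolding continuous_on_iff by metis
  obtain q where q: "q \<in> \<rat>" "q \<in> {0..1}" "\<bar>q - t\<bar> < d"
    using rat_dense01[OF assms(3) d(1)] by auto
  then have "dist (g q) (g t) < g t - r" using d(2)[of q] by (simp add: dist_real_def)
  moreover have "g q \<le> r" using assms(2) q by auto
  ultimately show False by (simp add: dist_real_def)
qed

lemma plin_approx:
  fixes w :: "real \<Rightarrow> 'b::real_normed_vector"
  assumes w: "continuous_on {0..1} w" and e: "e > 0"
    and n: "n > 0" and nd: "\<And>x x'. x \<in> {0..1} \<Longrightarrow> x' \<in> {0..1} \<Longrightarrow> \<bar>x' - x\<bar> \<le> 1 / real n \<Longrightarrow> dist (w x') (w x) < e / 3"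
    and ys: "length ys = Suc n" "\<And>k. k \<le> n \<Longrightarrow> dist (ys ! k) (w (real k / real n)) < e / 3"
    and t: "t \<in> {0..1}"
  shows "dist (plin n ys t) (w t) < e"
proof -
  define S where "S = (\<Sum>k\<le>n. hatf n k t)"
  have S: "S > 0" using hatf_sum_pos[OF t] by (simp add: S_def)
  have "plin n ys t - w t = (1 / S) *\<^sub>R (\<Sum>k\<le>n. hatf n k t *\<^sub>R (ys ! k - w t))"
    using S by (simp add: plin_def S_def[symmetric] scaleR_diff_right sum_subtractf
        scaleR_sum_left[symmetric] field_simps)
  then have "dist (plin n ys t) (w t) = (1/S) * norm (\<Sum>k\<le>n. hatf n k t *\<^sub>R (ys ! k - w t))"
    using S by (simp add: dist_norm)
  also have "\<dots> \<le> (1/S) * (\<Sum>k\<le>n. hatf n k t * norm (ys ! k - w t))"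
    using S by (intro mult_left_mono order_trans[OF norm_sum]) (auto simp: hatf_nonneg)
  also have "\<dots> \<le> (1/S) * (\<Sum>k\<le>n. hatf n k t * (e/3 + e/3))"
  proof (rule mult_left_mono[OF sum_mono])
    fix k assume k: "k \<in> {..n}"
    show "hatf n k t * norm (ys ! k - w t) \<le> hatf n k t * (e/3 + e/3)"
    proof (cases "hatf n k t = 0")
      case False
      then have "\<bar>real n * t - real k\<bar> < 1" by (auto simp: hatf_def)
      moreover have "real n * (t - real k / real n) = real n * t - real k" using n by (simp add: field_simps)
      ultimately have "\<bar>real n * (t - real k / real n)\<bar> < 1" by simp
      then have "real n * \<bar>t - real k / real n\<bar> < 1" by (simp add: abs_mult)
      then have "\<bar>t - real k / real n\<bar> < 1 / real n" using n by (simp add: field_simps)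
      moreover have "real k / real n \<in> {0..1}" using k n by auto
      ultimately have "dist (w t) (w (real k / real n)) < e/3"
        using nd[of "real k / real n" t] t by auto
      moreover have "dist (ys ! k) (w (real k / real n)) < e/3" using ys k by auto
      ultimately have "norm (ys ! k - w t) < e/3 + e/3"
        by (metis dist_norm dist_commute dist_triangle_lt add_strict_mono)
      then show ?thesis using hatf_nonneg[of n k t] by (intro mult_left_mono) auto
    qed simp
  qed (use S in auto)
  also have "\<dots> = e/3 + e/3"
    using S by (simp add: S_def[symmetric] sum_distrib_right[symmetric] del: times_divide_eq_left) (simp add: field_simps)
  finally show ?thesis using e by linarith
qed

lemma Cpaths_separable:
  obtains D :: "(real \<Rightarrow> 'b::euclidean_space) set" where "countable D"
    "\<And>p. p \<in> D \<Longrightarrow> continuous_on {0..1} p"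
    "\<And>w e. w \<in> Cpaths \<Longrightarrow> e > 0 \<Longrightarrow> \<exists>p\<in>D. \<forall>t\<in>{0..1}. dist (p t) (w t) < e"
proof -
  obtain Dd :: "'b set" where Dd: "countable Dd" "\<And>X. open X \<Longrightarrow> X \<noteq> {} \<Longrightarrow> \<exists>d\<in>Dd. d \<in> X"
    using countable_dense_setE by blast
  define D where "D = (\<lambda>(n, ys). plin n ys) ` (UNIV \<times> lists Dd)"
  have "countable D" unfolding D_def using Dd(1) by (intro countable_image countable_SIGMA) auto
  moreover have "continuous_on {0..1} p" if "p \<in> D" for p
    using that continuous_on_plin unfolding D_def by auto
  moreover have "\<exists>p\<in>D. \<forall>t\<in>{0..1}. dist (p t) (w t) < e" if w: "w \<in> Cpaths" and e: "e > 0" for w e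
  proof -
    have "uniformly_continuous_on {0..1} w"
      using w by (intro compact_uniformly_continuous) (auto simp: Cpaths_def)
    then obtain d where d: "d > 0" "\<And>x x'. x \<in> {0..1} \<Longrightarrow> x' \<in> {0..1} \<Longrightarrow> dist x' x < d \<Longrightarrow> dist (w x') (w x) < e/3"
      unfolding uniformly_continuous_on_def using e by (metis divide_pos_pos zero_less_numeral)
    define n where "n = nat \<lceil>2 / d\<rceil> + 1"
    have n: "n > 0" by (simp add: n_def)
    have "real n > 2 / d" unfolding n_def by linarith
    then have "1 / real n < d" using d(1) n by (simp add: field_simps)
    then have nd: "dist (w x') (w x) < e/3" if "x \<in> {0..1}" "x' \<in> {0..1}" "\<bar>x' - x\<bar> \<le> 1 / real n" for x x'
      using d(2)[OF that(1,2)] that(3) by (simp add: dist_real_def)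
    have ex: "\<exists>y. y \<in> Dd \<and> dist y (w (real k / real n)) < e/3" for k
      using Dd(2)[of "ball (w (real k / real n)) (e/3)"] e by (auto simp: dist_commute)
    define ys where "ys = map (\<lambda>k. SOME y. y \<in> Dd \<and> dist y (w (real k / real n)) < e/3) [0..<Suc n]"
    have ys: "length ys = Suc n" "\<And>k. k \<le> n \<Longrightarrow> dist (ys ! k) (w (real k / real n)) < e / 3"
      "set ys \<subseteq> Dd"
      using someI_ex[OF ex] by (auto simp: ys_def nth_append simp del: upt_Suc)
    have "plin n ys \<in> D" unfolding D_def using ys(3) by auto
    moreover have "\<forall>t\<in>{0..1}. dist (plin n ys t) (w t) < e"
      using plin_approx[OF _ e n nd ys(1,2)] w by (auto simp: Cpaths_def)
    ultimately show ?thesis by blast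
  qed
  ultimately show ?thesis using that by blast
qed

definition cyl :: "real set \<Rightarrow> (real \<Rightarrow> 'b set) \<Rightarrow> (real \<Rightarrow> 'b::metric_space) set" where
  "cyl F B = {w \<in> Cpaths. \<forall>t\<in>F. w t \<in> B t}"

definition cylsets :: "(real \<Rightarrow> 'b::metric_space) set set" where
  "cylsets = {cyl F B | F B. finite F \<and> (\<forall>t\<in>F. B t \<in> sets borel)}"

lemma cylsets_Pow: "cylsets \<subseteq> Pow Cpaths"
  by (auto simp: cylsets_def cyl_def)

lemma cyl_in_Cborel:
  assumes "finite F" "\<And>t. t \<in> F \<Longrightarrow> B t \<in> sets borel"
  shows "cyl F B \<in> sets Cborel"
proof -
  have "cyl F B = {w \<in> space Cborel. \<forall>t\<in>F. w t \<in> B t}"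
    by (simp add: cyl_def space_Cborel)
  also have "\<dots> \<in> sets Cborel"
    using assms by (intro sets.sets_Collect_finite_All) (auto intro: measurable_sets[OF ev_measurable'])
  finally show ?thesis .
qed

lemma cylsets_sub_Cborel: "cylsets \<subseteq> sets Cborel"
  using cyl_in_Cborel by (auto simp: cylsets_def)

lemma sets_Cborel_cyl: "sets Cborel = sigma_sets Cpaths (cylsets :: (real \<Rightarrow> 'b::euclidean_space) set set)"
proof
  show "sigma_sets Cpaths cylsets \<subseteq> sets (Cborel :: (real \<Rightarrow> 'b) measure)"
    using sets.sigma_sets_subset[OF cylsets_sub_Cborel] space_Cborel by metis
next
  interpret S: sigma_algebra Cpaths "sigma_sets Cpaths (cylsets :: (real \<Rightarrow> 'b) set set)"
    using cylsets_Pow by (rule sigma_algebra_sigma_sets)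
  obtain D :: "(real \<Rightarrow> 'b) set" where D: "countable D"
    "\<And>p. p \<in> D \<Longrightarrow> continuous_on {0..1} p"
    "\<And>w e. w \<in> Cpaths \<Longrightarrow> e > 0 \<Longrightarrow> \<exists>p\<in>D. \<forall>t\<in>{0..1}. dist (p t) (w t) < e"
    using Cpaths_separable by blast
  define Bc where "Bc p r = (\<Inter>q\<in>\<rat> \<inter> {0..1}. cyl {q} (\<lambda>_. cball (p q) r))" for p :: "real \<Rightarrow> 'b" and r
  have Bc_in: "Bc p r \<in> sigma_sets Cpaths cylsets" for p r
    unfolding Bc_def
  proof (rule S.countable_INT')
    show "countable (\<rat> \<inter> {0..1::real})" using countable_rat by auto
    show "\<rat> \<inter> {0..1::real} \<noteq> {}" by (auto intro: exI[of _ 0])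
    show "(\<lambda>q. cyl {q} (\<lambda>_. cball (p q) r)) ` (\<rat> \<inter> {0..1}) \<subseteq> sigma_sets Cpaths cylsets"
      by (auto simp: cylsets_def intro!: sigma_sets.Basic exI[of _ "{_}"])
  qed
  have Bc_sub: "Bc p r \<subseteq> Cpaths" for p r
    unfolding Bc_def cyl_def by (auto intro: exI[of _ 0])
  have Bc_le: "dist (p t) (w t) \<le> r" if "w \<in> Bc p r" "p \<in> D" "t \<in> {0..1}" for p r w t
  proof (rule rat_extend_le[where g = "\<lambda>t. dist (p t) (w t)"])
    show "continuous_on {0..1} (\<lambda>t. dist (p t) (w t))"
      using D(2)[OF that(2)] Bc_sub that(1) by (intro continuous_intros) (auto simp: Cpaths_def)
  qed (use that in \<open>auto simp: Bc_def cyl_def\<close>)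
  have "U \<in> sigma_sets Cpaths cylsets" if U: "U \<in> Copen" for U :: "(real \<Rightarrow> 'b) set"
  proof -
    define I where "I = {(p, r). p \<in> D \<and> r \<in> \<rat> \<and> r > 0 \<and> Bc p r \<subseteq> U}"
    have "countable I"
      by (rule countable_subset[of _ "D \<times> \<rat>"]) (auto simp: I_def D(1) countable_rat)
    have "U = (\<Union>(p, r)\<in>I. Bc p r)"
    proof
      show "(\<Union>(p, r)\<in>I. Bc p r) \<subseteq> U" by (auto simp: I_def)
      show "U \<subseteq> (\<Union>(p, r)\<in>I. Bc p r)"
      proof
        fix w assume w: "w \<in> U"
        then have wC: "w \<in> Cpaths" using U by (auto simp: Copen_def)
        obtain e where e: "e > 0" "\<And>w'. w' \<in> Cpaths \<Longrightarrow> sup_dist w w' < e \<Longrightarrow> w' \<in> U"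
          using U w by (auto simp: Copen_def)
        obtain r where r: "r \<in> \<rat>" "0 < r" "r < e / 2"
          using Rats_dense_in_real[of 0 "e/2"] e by auto
        obtain p where p: "p \<in> D" "\<And>t. t \<in> {0..1} \<Longrightarrow> dist (p t) (w t) < r"
          using D(3)[OF wC r(2)] by auto
        have "w \<in> Bc p r" using p wC by (auto simp: Bc_def cyl_def less_imp_le)
        moreover have "Bc p r \<subseteq> U"
        proof
          fix w' assume w': "w' \<in> Bc p r"
          have "sup_dist w w' \<le> 2 * r"
          proof (rule sup_dist_le)
            fix t :: real assume t: "t \<in> {0..1}"
            have "dist (w t) (w' t) \<le> dist (p t) (w t) + dist (p t) (w' t)"
              by (rule dist_triangle3)
            also have "\<dots> \<le> r + r" using p(2)[OF t] Bc_le[OF w' p(1) t] by linarith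
            finally show "dist (w t) (w' t) \<le> 2 * r" by simp
          qed
          then show "w' \<in> U" using e(2)[of w'] Bc_sub w' r by auto
        qed
        ultimately show "w \<in> (\<Union>(p, r)\<in>I. Bc p r)" using p r by (auto simp: I_def)
      qed
    qed
    also have "\<dots> \<in> sigma_sets Cpaths cylsets"
      using \<open>countable I\<close> Bc_in by (intro S.countable_UN'') auto
    finally show ?thesis .
  qed
  then show "sets (Cborel :: (real \<Rightarrow> 'b) measure) \<subseteq> sigma_sets Cpaths cylsets"
    unfolding sets_Cborel by (intro S.sigma_sets_subset) auto
qed

lemma measurable_CborelI:
  fixes f :: "'x \<Rightarrow> real \<Rightarrow> 'b::euclidean_space"
  assumes "\<And>x. x \<in> space M \<Longrightarrow> f x \<in> Cpaths"
    and "\<And>t. t \<in> {0..1} \<Longrightarrow> (\<lambda>x. f x t) \<in> borel_measurable M"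
  shows "f \<in> measurable M Cborel"
proof (rule measurable_sigma_sets[OF sets_Cborel_cyl cylsets_Pow])
  show "f \<in> space M \<rightarrow> Cpaths" using assms(1) by auto
  fix y assume "y \<in> (cylsets :: (real \<Rightarrow> 'b) set set)"
  then obtain F B where y: "y = cyl F B" "finite F" "\<And>t. t \<in> F \<Longrightarrow> B t \<in> sets borel"
    by (auto simp: cylsets_def)
  have "f -` y \<inter> space M = {x \<in> space M. \<forall>t\<in>F. f x (clamp01 t) \<in> B t}"
  proof -
    have *: "(\<forall>t\<in>F. f x t \<in> B t) = (\<forall>t\<in>F. f x (clamp01 t) \<in> B t)" if "x \<in> space M" for x
      by (simp add: Cpaths_clamp[OF assms(1)[OF that], symmetric])
    show ?thesis using assms(1) * by (auto simp: y cyl_def)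
  qed
  also have "\<dots> \<in> sets M"
  proof (intro sets.sets_Collect_finite_All)
    fix t assume t: "t \<in> F"
    have "(\<lambda>x. f x (clamp01 t)) -` B t \<inter> space M \<in> sets M"
      by (rule measurable_sets[OF assms(2)[OF clamp01_in] y(3)[OF t]])
    moreover have "(\<lambda>x. f x (clamp01 t)) -` B t \<inter> space M = {x \<in> space M. f x (clamp01 t) \<in> B t}"
      by auto
    ultimately show "{x \<in> space M. f x (clamp01 t) \<in> B t} \<in> sets M" by simp
  qed (use y in auto)
  finally show "f -` y \<inter> space M \<in> sets M" .
qed

lemma Int_stable_cylsets: "Int_stable (cylsets :: (real \<Rightarrow> 'b::metric_space) set set)"
proof (rule Int_stableI)
  fix a b :: "(real \<Rightarrow> 'b) set" assume "a \<in> cylsets" "b \<in> cylsets"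
  then obtain F F' :: "real set" and B B' :: "real \<Rightarrow> 'b set" where ab: "a = cyl F B" "finite F" "\<And>t. t \<in> F \<Longrightarrow> B t \<in> sets borel"
    "b = cyl F' B'" "finite F'" "\<And>t. t \<in> F' \<Longrightarrow> B' t \<in> sets borel"
    by (auto simp: cylsets_def)
  define C where "C t = (if t \<in> F then B t else UNIV) \<inter> (if t \<in> F' then B' t else UNIV)" for t
  have "a \<inter> b = cyl (F \<union> F') C"
    by (auto simp: ab cyl_def C_def)
  moreover have "C t \<in> sets borel" for t
    using ab by (auto simp: C_def)
  ultimately show "a \<inter> b \<in> cylsets"
    using ab by (auto simp: cylsets_def)
qed

lemma Cborel_measure_eqI:
  fixes M N :: "(real \<Rightarrow> 'b::euclidean_space) measure"
  assumes "sets M = sets Cborel" "sets N = sets Cborel" "finite_measure M"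
    and "\<And>F B. finite F \<Longrightarrow> (\<And>t. t \<in> F \<Longrightarrow> B t \<in> sets borel) \<Longrightarrow> emeasure M (cyl F B) = emeasure N (cyl F B)"
  shows "M = N"
proof (rule measure_eqI_generator_eq[OF Int_stable_cylsets cylsets_Pow])
  show "sets M = sigma_sets Cpaths cylsets" "sets N = sigma_sets Cpaths cylsets"
    using assms(1,2) sets_Cborel_cyl by auto
  show "\<And>X. X \<in> cylsets \<Longrightarrow> emeasure M X = emeasure N X"
    using assms(4) by (auto simp: cylsets_def)
  show "range (\<lambda>i::nat. cyl {} (\<lambda>_. UNIV)) \<subseteq> cylsets" by (auto simp: cylsets_def)
  show "(\<Union>i::nat. cyl {} (\<lambda>_. UNIV)) = Cpaths" by (auto simp: cyl_def)
  show "\<And>i::nat. emeasure M (cyl {} (\<lambda>_. UNIV)) \<noteq> \<infinity>"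
    using finite_measure.emeasure_finite[OF assms(3)] by simp
qed

definition DQ :: "(real \<Rightarrow> 'a::real_normed_vector) \<Rightarrow> real \<Rightarrow> real \<Rightarrow> 'a" where
  "DQ h s t = (1 / (t - s)) *\<^sub>R (h t - h s)"

definition Cnd :: "(real \<Rightarrow> 'a::real_normed_vector) \<Rightarrow> real \<Rightarrow> real \<Rightarrow> bool" where
  "Cnd h e d \<longleftrightarrow> (\<forall>s t s' t'. s \<in> {0..1} \<longrightarrow> t \<in> {0..1} \<longrightarrow> s' \<in> {0..1} \<longrightarrow> t' \<in> {0..1} \<longrightarrow>
     s \<noteq> t \<longrightarrow> s' \<noteq> t' \<longrightarrow> \<bar>s - s'\<bar> < d \<longrightarrow> \<bar>t - s\<bar> < d \<longrightarrow> \<bar>t' - s'\<bar> < d \<longrightarrow>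
     norm (DQ h s t - DQ h s' t') \<le> e)"

lemma closed_segment_real_dist:
  fixes s t u :: real
  assumes "u \<in> closed_segment s t"
  shows "\<bar>u - s\<bar> \<le> \<bar>t - s\<bar>"
  using assms by (auto simp: closed_segment_eq_real_ivl split: if_splits)

lemma closed_segment_real_sub01:
  fixes s t :: real
  assumes "s \<in> {0..1}" "t \<in> {0..1}"
  shows "closed_segment s t \<subseteq> {0..1}"
  using assms by (auto simp: closed_segment_eq_real_ivl split: if_splits)

lemma mvt_DQ:
  fixes h g :: "real \<Rightarrow> 'a::real_normed_vector"
  assumes deriv: "\<And>u. u \<in> {0..1} \<Longrightarrow> (h has_vector_derivative g u) (at u within {0..1})"
    and st: "s \<in> {0..1}" "t \<in> {0..1}" "s \<noteq> t"
    and bound: "\<And>u. u \<in> closed_segment s t \<Longrightarrow> norm (g u - g s) \<le> B"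
  shows "norm (DQ h s t - g s) \<le> B"
proof -
  define f where "f u = h u - u *\<^sub>R g s" for u
  define S where "S = closed_segment s t"
  have S01: "S \<subseteq> {0..1}" unfolding S_def by (rule closed_segment_real_sub01[OF st(1,2)])
  have df: "(f has_derivative (\<lambda>x. x *\<^sub>R (g u - g s))) (at u within S)" if u: "u \<in> S" for u
  proof -
    have "(h has_vector_derivative g u) (at u within S)"
      using has_vector_derivative_within_subset[OF deriv[of u] S01] u S01 by auto
    moreover have "((\<lambda>u. u *\<^sub>R g s) has_vector_derivative g s) (at u within S)"
      using has_vector_derivative_scaleR[OF DERIV_ident has_vector_derivative_const[of "g s"], of u S]
      by simp
    ultimately have "(f has_vector_derivative (g u - g s)) (at u within S)"
      unfolding f_def by (rule has_vector_derivative_diff)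
    then show ?thesis by (simp add: has_vector_derivative_def)
  qed
  have "norm (f t - f s) \<le> B * norm (t - s)"
  proof (rule differentiable_bound[of S f "\<lambda>u x. x *\<^sub>R (g u - g s)"])
    show "convex S" unfolding S_def by simp
    show "\<And>x. x \<in> S \<Longrightarrow> (f has_derivative (\<lambda>xa. xa *\<^sub>R (g x - g s))) (at x within S)" by (rule df)
    show "\<And>x. x \<in> S \<Longrightarrow> onorm (\<lambda>xa. xa *\<^sub>R (g x - g s)) \<le> B"
      using bound unfolding S_def
      by (simp add: onorm_scaleR_left[OF bounded_linear_ident] onorm_id[where 'a=real])
  qed (auto simp: S_def)
  moreover have "f t - f s = (t - s) *\<^sub>R (DQ h s t - g s)"
    using st by (simp add: f_def DQ_def algebra_simps)
  ultimately have "\<bar>t - s\<bar> * norm (DQ h s t - g s) \<le> B * \<bar>t - s\<bar>" by simp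
  then show ?thesis using st by (simp add: mult.commute)
qed

lemma C1_imp_Cnd:
  fixes h g :: "real \<Rightarrow> 'a::real_normed_vector"
  assumes deriv: "\<And>u. u \<in> {0..1} \<Longrightarrow> (h has_vector_derivative g u) (at u within {0..1})"
    and gc: "continuous_on {0..1} g" and e: "e > 0"
  shows "\<exists>d>0. Cnd h e d"
proof -
  have "uniformly_continuous_on {0..1} g"
    using gc by (intro compact_uniformly_continuous) auto
  then obtain d where d: "d > 0" "\<And>x x'. x \<in> {0..1} \<Longrightarrow> x' \<in> {0..1} \<Longrightarrow> dist x' x < d \<Longrightarrow> dist (g x') (g x) < e/3"
    unfolding uniformly_continuous_on_def using e by (metis divide_pos_pos zero_less_numeral)
  have key: "norm (DQ h s t - g s) \<le> e/3" if "s \<in> {0..1}" "t \<in> {0..1}" "s \<noteq> t" "\<bar>t - s\<bar> < d" for s t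
  proof (rule mvt_DQ[OF deriv that(1-3)])
    fix u assume u: "u \<in> closed_segment s t"
    then have "u \<in> {0..1}" using closed_segment_real_sub01[OF that(1,2)] by auto
    moreover have "\<bar>u - s\<bar> < d" using closed_segment_real_dist[OF u] that(4) by linarith
    ultimately have "dist (g u) (g s) < e/3" using d(2)[of s u] that(1) by (simp add: dist_real_def)
    then show "norm (g u - g s) \<le> e/3" by (simp add: dist_norm)
  qed
  have "Cnd h e d"
    unfolding Cnd_def
  proof (intro allI impI)
    fix s t s' t' :: real
    assume a: "s \<in> {0..1}" "t \<in> {0..1}" "s' \<in> {0..1}" "t' \<in> {0..1}" "s \<noteq> t" "s' \<noteq> t'"
      "\<bar>s - s'\<bar> < d" "\<bar>t - s\<bar> < d" "\<bar>t' - s'\<bar> < d"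
    have "norm (DQ h s t - DQ h s' t') \<le> norm (DQ h s t - g s) + norm (g s - g s') + norm (DQ h s' t' - g s')"
    proof -
      have tri: "norm (a + b - c) \<le> norm a + norm b + norm c" for a b c :: 'a
        by (smt (verit) norm_triangle_ineq norm_triangle_ineq4)
      have "DQ h s t - DQ h s' t' = (DQ h s t - g s) + (g s - g s') - (DQ h s' t' - g s')" by simp
      then show ?thesis using tri by metis
    qed
    also have "\<dots> \<le> e/3 + e/3 + e/3"
    proof (intro add_mono)
      show "norm (g s - g s') \<le> e / 3"
        using d(2)[of s' s] a by (simp add: dist_norm dist_real_def)
    qed (use key a in auto)
    finally show "norm (DQ h s t - DQ h s' t') \<le> e" by simp
  qed
  then show ?thesis using d(1) by blast
qed

definition uu :: "nat \<Rightarrow> real \<Rightarrow> real" where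
  "uu n x = x + (if x \<le> 1/2 then 1 else -1) / (real n + 2)"

lemma uu_props:
  assumes "x \<in> {0..1}"
  shows "uu n x \<in> {0..1}" "uu n x \<noteq> x" "\<bar>uu n x - x\<bar> = 1 / (real n + 2)"
proof -
  define a where "a = 1 / (real n + 2)"
  have a: "a \<le> 1/2" "a > 0" by (auto simp: a_def field_simps)
  have u: "uu n x = x + (if x \<le> 1/2 then a else -a)" by (simp add: uu_def a_def)
  show "uu n x \<in> {0..1}" using assms a by (auto simp: u)
  show "uu n x \<noteq> x" using a by (auto simp: u)
  show "\<bar>uu n x - x\<bar> = 1 / (real n + 2)" using a by (auto simp: u a_def)
qed

lemma inv_small:
  assumes "(d::real) > 0"
  shows "\<exists>N. \<forall>n\<ge>N. 1 / (real n + 2) < d"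
proof -
  obtain N where N: "inverse (real (Suc N)) < d" using reals_Archimedean[OF assms] by blast
  have "1 / (real n + 2) < d" if "n \<ge> N" for n
  proof -
    have "1 / (real n + 2) \<le> inverse (real (Suc N))"
      using that by (simp add: field_simps)
    then show ?thesis using N by linarith
  qed
  then show ?thesis by blast
qed

definition glim :: "(real \<Rightarrow> 'a::real_normed_vector) \<Rightarrow> real \<Rightarrow> 'a" where
  "glim h x = lim (\<lambda>n. DQ h x (uu n x))"

lemma Cnd_conv:
  fixes h :: "real \<Rightarrow> 'a::banach"
  assumes H: "\<And>e. e > 0 \<Longrightarrow> \<exists>d>0. Cnd h e d" and x: "x \<in> {0..1}"
  shows "(\<lambda>n. DQ h x (uu n x)) \<longlonglongrightarrow> glim h x"
proof -
  have "Cauchy (\<lambda>n. DQ h x (uu n x))"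
  proof (rule CauchyI)
    fix e :: real assume e: "e > 0"
    obtain d where d: "d > 0" "Cnd h (e/2) d" using H[of "e/2"] e by auto
    obtain N where N: "\<forall>n\<ge>N. 1 / (real n + 2) < d" using inv_small[OF d(1)] by blast
    have "norm (DQ h x (uu m x) - DQ h x (uu n x)) \<le> e/2" if "m \<ge> N" "n \<ge> N" for m n
    proof -
      have "\<bar>uu m x - x\<bar> < d" "\<bar>uu n x - x\<bar> < d"
        using uu_props(3)[OF x] N that by auto
      then show ?thesis
        using d(2)[unfolded Cnd_def, rule_format, of x "uu m x" x "uu n x"] x uu_props(1,2)[OF x] d(1)
        by (metis abs_0 diff_self)
    qed
    then show "\<exists>M. \<forall>m\<ge>M. \<forall>n\<ge>M. norm (DQ h x (uu m x) - DQ h x (uu n x)) < e"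
      using e by (intro exI[of _ N]) (auto intro: le_less_trans[of _ "e/2"])
  qed
  then have "convergent (\<lambda>n. DQ h x (uu n x))" by (rule Cauchy_convergent)
  then show ?thesis unfolding glim_def by (simp only: convergent_LIMSEQ_iff)
qed

lemma Cnd_bound:
  fixes h :: "real \<Rightarrow> 'a::banach"
  assumes H: "\<And>e. e > 0 \<Longrightarrow> \<exists>d>0. Cnd h e d" and C: "Cnd h e d"
    and st: "s \<in> {0..1}" "t \<in> {0..1}" "s' \<in> {0..1}" "s \<noteq> t" "\<bar>s - s'\<bar> < d" "\<bar>t - s\<bar> < d"
  shows "norm (DQ h s t - glim h s') \<le> e"
proof -
  have "d > 0" using st by linarith
  obtain N where N: "\<forall>n\<ge>N. 1 / (real n + 2) < d" using inv_small[OF \<open>d > 0\<close>] by blast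
  have "(\<lambda>n. norm (DQ h s t - DQ h s' (uu n s'))) \<longlonglongrightarrow> norm (DQ h s t - glim h s')"
    by (intro tendsto_intros Cnd_conv[OF H st(3)])
  moreover have "\<forall>n\<ge>N. norm (DQ h s t - DQ h s' (uu n s')) \<le> e"
  proof (intro allI impI)
    fix n assume n: "n \<ge> N"
    have "\<bar>uu n s' - s'\<bar> < d" using uu_props(3)[OF st(3), of n] N n by simp
    then show "norm (DQ h s t - DQ h s' (uu n s')) \<le> e"
      using C[unfolded Cnd_def, rule_format, of s t s' "uu n s'"] st uu_props(1,2)[OF st(3), of n]
      by simp
  qed
  ultimately show ?thesis by (intro LIMSEQ_le_const2) auto
qed

lemma Cnd_deriv:
  fixes h :: "real \<Rightarrow> 'a::banach"
  assumes H: "\<And>e. e > 0 \<Longrightarrow> \<exists>d>0. Cnd h e d" and x: "x \<in> {0..1}"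
  shows "(h has_vector_derivative glim h x) (at x within {0..1})"
  unfolding has_vector_derivative_def has_derivative_within
proof (intro conjI bounded_linear_scaleR_left)
  show "((\<lambda>y. (1 / norm (y - x)) *\<^sub>R (h y - (h x + (y - x) *\<^sub>R glim h x))) \<longlongrightarrow> 0) (at x within {0..1})"
    unfolding tendsto_iff
  proof (intro allI impI)
    fix e :: real assume e: "e > 0"
    obtain d where d: "d > 0" "Cnd h (e/2) d" using H[of "e/2"] e by auto
    have "dist ((1 / norm (y - x)) *\<^sub>R (h y - (h x + (y - x) *\<^sub>R glim h x))) 0 < e"
      if y: "y \<in> {0..1}" "y \<noteq> x" "dist y x < d" for y
    proof -
      have "(1 / (y - x)) *\<^sub>R (h y - (h x + (y - x) *\<^sub>R glim h x)) =
          (1 / (y - x)) *\<^sub>R (h y - h x) - (1 / (y - x)) *\<^sub>R ((y - x) *\<^sub>R glim h x)"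
        by (simp only: diff_diff_eq[symmetric] scaleR_diff_right)
      also have "\<dots> = DQ h x y - glim h x"
        using y(2) by (simp add: DQ_def)
      finally have "(1 / (y - x)) *\<^sub>R (h y - (h x + (y - x) *\<^sub>R glim h x)) = DQ h x y - glim h x" .
      then have "norm (DQ h x y - glim h x) = norm ((1 / (y - x)) *\<^sub>R (h y - (h x + (y - x) *\<^sub>R glim h x)))"
        by simp
      also have "\<dots> = norm (h y - (h x + (y - x) *\<^sub>R glim h x)) / \<bar>y - x\<bar>"
        by simp
      finally have "norm ((1 / norm (y - x)) *\<^sub>R (h y - (h x + (y - x) *\<^sub>R glim h x))) = norm (DQ h x y - glim h x)"
        by simp
      also have "\<dots> \<le> e/2"
      proof (rule Cnd_bound[OF H d(2) x y(1) x])
        show "x \<noteq> y" using y(2) by simp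
        show "\<bar>x - x\<bar> < d" using d(1) by simp
        show "\<bar>y - x\<bar> < d" using y(3) by (simp add: dist_real_def)
      qed
      finally have "norm ((1 / norm (y - x)) *\<^sub>R (h y - (h x + (y - x) *\<^sub>R glim h x))) \<le> e/2" .
      then show ?thesis using e by (simp only: dist_norm diff_zero)
    qed
    then show "\<forall>\<^sub>F y in at x within {0..1}. dist ((1 / norm (y - x)) *\<^sub>R (h y - (h x + (y - x) *\<^sub>R glim h x))) 0 < e"
      unfolding eventually_at using d(1) by (intro exI[of _ d]) auto
  qed
qed

lemma Cnd_cont:
  fixes h :: "real \<Rightarrow> 'a::banach"
  assumes H: "\<And>e. e > 0 \<Longrightarrow> \<exists>d>0. Cnd h e d"
  shows "continuous_on {0..1} (glim h)"
  unfolding continuous_on_iff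
proof (intro ballI allI impI)
  fix x e :: real assume x: "x \<in> {0..1}" and e: "e > 0"
  obtain d where d: "d > 0" "Cnd h (e/3) d" using H[of "e/3"] e by auto
  obtain N where N: "\<forall>n\<ge>N. 1 / (real n + 2) < d" using inv_small[OF d(1)] by blast
  have "dist (glim h x') (glim h x) < e" if x': "x' \<in> {0..1}" "dist x' x < d" for x'
  proof -
    define t where "t = uu N x"
    have t: "t \<in> {0..1}" "t \<noteq> x" "\<bar>t - x\<bar> < d"
      using uu_props[OF x, of N] N by (auto simp: t_def)
    have "norm (DQ h x t - glim h x') \<le> e/3"
    proof -
      have "\<bar>x - x'\<bar> < d" using x'(2) by (simp add: dist_real_def)
      then show ?thesis using Cnd_bound[OF H d(2) x t(1) x'(1) not_sym[OF t(2)]] t(3) by blast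
    qed
    moreover have "norm (DQ h x t - glim h x) \<le> e/3"
      using Cnd_bound[OF H d(2) x t(1) x not_sym[OF t(2)]] t d by auto
    ultimately have "norm (glim h x' - glim h x) \<le> e/3 + e/3"
      using norm_triangle_ineq4[of "DQ h x t - glim h x" "DQ h x t - glim h x'"] by (simp add: norm_minus_commute)
    then show ?thesis using e by (simp add: dist_norm)
  qed
  then show "\<exists>d>0. \<forall>x'\<in>{0..1}. dist x' x < d \<longrightarrow> dist (glim h x') (glim h x) < e"
    using d(1) by blast
qed

lemma Cnd_mono:
  assumes "Cnd h e d" "e \<le> e'" "d' \<le> d"
  shows "Cnd h e' d'"
  using assms unfolding Cnd_def by (meson less_le_trans order_trans)

lemma inv_Suc_small:
  assumes "(d::real) > 0"
  shows "\<exists>k::nat. 1 / (real k + 1) < d"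
  using reals_Archimedean[OF assms] by (metis inverse_eq_divide of_nat_Suc add.commute)

lemma C1_iff_Cnd:
  fixes h :: "real \<Rightarrow> 'a::banach"
  shows "(\<exists>g. continuous_on {0..1} g \<and> (\<forall>t\<in>{0..1}. (h has_vector_derivative g t) (at t within {0..1})))
    \<longleftrightarrow> (\<forall>m::nat. \<exists>k::nat. Cnd h (1 / (real m + 1)) (1 / (real k + 1)))"
proof
  assume "\<exists>g. continuous_on {0..1} g \<and> (\<forall>t\<in>{0..1}. (h has_vector_derivative g t) (at t within {0..1}))"
  then obtain g where g: "continuous_on {0..1} g" "\<And>t. t \<in> {0..1} \<Longrightarrow> (h has_vector_derivative g t) (at t within {0..1})"
    by blast
  show "\<forall>m::nat. \<exists>k::nat. Cnd h (1 / (real m + 1)) (1 / (real k + 1))"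
  proof
    fix m :: nat
    obtain d where d: "d > 0" "Cnd h (1 / (real m + 1)) d"
      using C1_imp_Cnd[OF g(2) g(1), of "1 / (real m + 1)"] by auto
    obtain k :: nat where k: "1 / (real k + 1) < d" using inv_Suc_small[OF d(1)] by blast
    show "\<exists>k::nat. Cnd h (1 / (real m + 1)) (1 / (real k + 1))"
      using Cnd_mono[OF d(2) order_refl less_imp_le[OF k]] by blast
  qed
next
  assume A: "\<forall>m::nat. \<exists>k::nat. Cnd h (1 / (real m + 1)) (1 / (real k + 1))"
  have H: "\<exists>d>0. Cnd h e d" if e: "e > 0" for e
  proof -
    obtain m :: nat where m: "1 / (real m + 1) < e" using inv_Suc_small[OF e] by blast
    obtain k :: nat where "Cnd h (1 / (real m + 1)) (1 / (real k + 1))" using A by blast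
    then have "Cnd h e (1 / (real k + 1))" using Cnd_mono m by (meson less_imp_le order_refl)
    then show ?thesis by (intro exI[of _ "1 / (real k + 1)"]) auto
  qed
  show "\<exists>g. continuous_on {0..1} g \<and> (\<forall>t\<in>{0..1}. (h has_vector_derivative g t) (at t within {0..1}))"
    using Cnd_cont[OF H] Cnd_deriv[OF H] by blast
qed

lemma C1y_Cnd: "C1y = {w \<in> Cpaths. \<forall>m::nat. \<exists>k::nat. Cnd (\<lambda>s. snd (w s)) (1 / (real m + 1)) (1 / (real k + 1))}"
  unfolding C1y_def using C1_iff_Cnd by blast

lemma DQ_diff_bound:
  fixes w w' :: "real \<Rightarrow> 'a::real_normed_vector \<times> 'a"
  assumes "w \<in> Cpaths" "w' \<in> Cpaths" "s \<noteq> t"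
  shows "norm (DQ (\<lambda>s. snd (w s)) s t - DQ (\<lambda>s. snd (w' s)) s t) \<le> 2 * sup_dist w w' / \<bar>t - s\<bar>"
proof -
  have b: "norm (snd (w u) - snd (w' u)) \<le> sup_dist w w'" for u
    using dist_snd_le[of "w u" "w' u"] dist_le_sup_dist[OF assms(1,2), of u] by (simp add: dist_norm)
  have "DQ (\<lambda>s. snd (w s)) s t - DQ (\<lambda>s. snd (w' s)) s t =
      (1 / (t - s)) *\<^sub>R ((snd (w t) - snd (w' t)) - (snd (w s) - snd (w' s)))"
    by (simp add: DQ_def algebra_simps)
  then have "norm (DQ (\<lambda>s. snd (w s)) s t - DQ (\<lambda>s. snd (w' s)) s t) =
      norm ((snd (w t) - snd (w' t)) - (snd (w s) - snd (w' s))) / \<bar>t - s\<bar>"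
    by simp
  also have "\<dots> \<le> (sup_dist w w' + sup_dist w w') / \<bar>t - s\<bar>"
    using b[of t] b[of s] norm_triangle_ineq4[of "snd (w t) - snd (w' t)" "snd (w s) - snd (w' s)"]
    by (intro divide_right_mono) auto
  finally show ?thesis by simp
qed

lemma Cnd_set_closed:
  "{w \<in> (Cpaths :: (real \<Rightarrow> 'a::real_normed_vector \<times> 'a) set). Cnd (\<lambda>s. snd (w s)) e d} \<in> sets Cborel"
proof (rule closedI_Cborel)
  fix w :: "real \<Rightarrow> 'a \<times> 'a"
  assume w: "w \<in> Cpaths" "w \<notin> {w \<in> Cpaths. Cnd (\<lambda>s. snd (w s)) e d}"
  then obtain s t s' t' where st: "s \<in> {0..1}" "t \<in> {0..1}" "s' \<in> {0..1}" "t' \<in> {0..1}" "s \<noteq> t" "s' \<noteq> t'"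
    "\<bar>s - s'\<bar> < d" "\<bar>t - s\<bar> < d" "\<bar>t' - s'\<bar> < d"
    and gt: "norm (DQ (\<lambda>s. snd (w s)) s t - DQ (\<lambda>s. snd (w s)) s' t') > e"
    unfolding Cnd_def by auto
  define a where "a = norm (DQ (\<lambda>s. snd (w s)) s t - DQ (\<lambda>s. snd (w s)) s' t') - e"
  define m where "m = min \<bar>t - s\<bar> \<bar>t' - s'\<bar>"
  have a: "a > 0" using gt by (simp add: a_def)
  have m: "m > 0" "m \<le> \<bar>t - s\<bar>" "m \<le> \<bar>t' - s'\<bar>" using st by (auto simp: m_def)
  show "\<exists>ee>0. \<forall>w'\<in>Cpaths. sup_dist w w' < ee \<longrightarrow> w' \<notin> {w \<in> Cpaths. Cnd (\<lambda>s. snd (w s)) e d}"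
  proof (intro exI[of _ "a * m / 8"] conjI ballI impI)
    show "a * m / 8 > 0" using a m by simp
    fix w' assume w': "w' \<in> Cpaths" "sup_dist w w' < a * m / 8"
    have sd0: "sup_dist w w' \<ge> 0" using dist_le_sup_dist[OF w(1) w'(1), of 0] zero_le_dist[of "w 0" "w' 0"] by linarith
    have bnd: "norm (DQ (\<lambda>s. snd (w s)) u v - DQ (\<lambda>s. snd (w' s)) u v) \<le> a / 4"
      if "u \<noteq> v" "m \<le> \<bar>v - u\<bar>" for u v
    proof -
      have "norm (DQ (\<lambda>s. snd (w s)) u v - DQ (\<lambda>s. snd (w' s)) u v) \<le> 2 * sup_dist w w' / \<bar>v - u\<bar>"
        by (rule DQ_diff_bound[OF w(1) w'(1) that(1)])
      also have "\<dots> \<le> 2 * sup_dist w w' / m"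
        using m that sd0 by (intro divide_left_mono) auto
      also have "\<dots> \<le> 2 * (a * m / 8) / m"
        using m w'(2) by (intro divide_right_mono) auto
      also have "\<dots> = a / 4" using m by simp
      finally show ?thesis .
    qed
    have "norm (DQ (\<lambda>s. snd (w' s)) s t - DQ (\<lambda>s. snd (w' s)) s' t') > e"
    proof -
      define A where "A = DQ (\<lambda>s. snd (w s)) s t"
      define B where "B = DQ (\<lambda>s. snd (w s)) s' t'"
      define A' where "A' = DQ (\<lambda>s. snd (w' s)) s t"
      define B' where "B' = DQ (\<lambda>s. snd (w' s)) s' t'"
      have 1: "norm (A - A') \<le> a/4" unfolding A_def A'_def using bnd st m by auto
      have 2: "norm (B - B') \<le> a/4" unfolding B_def B'_def using bnd st m by auto
      have "norm (A - B) \<le> norm (A - A') + norm (A' - B') + norm (B' - B)"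
      proof -
        have "A - B = (A - A') + (A' - B') + (B' - B)" by simp
        then show ?thesis by (metis norm_triangle_ineq order_trans add_right_mono)
      qed
      moreover have "norm (B' - B) = norm (B - B')" by (rule norm_minus_commute)
      moreover have "norm (A - B) = a + e" unfolding A_def B_def a_def by simp
      ultimately have "norm (A' - B') \<ge> e + a/2" using 1 2 by linarith
      then show ?thesis unfolding A'_def B'_def using a by linarith
    qed
    moreover have "norm (DQ (\<lambda>s. snd (w' s)) s t - DQ (\<lambda>s. snd (w' s)) s' t') \<le> e"
      if "Cnd (\<lambda>s. snd (w' s)) e d"
      using that[unfolded Cnd_def, rule_format, OF st] .
    ultimately show "w' \<notin> {w \<in> Cpaths. Cnd (\<lambda>s. snd (w s)) e d}"
      by force
  qed
qed auto

lemma C1y_measurable: "C1y \<in> sets Cborel"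
proof -
  have "C1y = (\<Inter>m::nat. \<Union>k::nat. {w \<in> Cpaths. Cnd (\<lambda>s. snd (w s)) (1 / (real m + 1)) (1 / (real k + 1))})"
    unfolding C1y_Cnd by auto
  also have "\<dots> \<in> sets Cborel"
    using Cnd_set_closed by (intro sets.countable_INT sets.countable_UN) auto
  finally show ?thesis .
qed

lemma C1y_H:
  assumes "w \<in> C1y"
  shows "\<And>e. e > 0 \<Longrightarrow> \<exists>d>0. Cnd (\<lambda>s. snd (w s)) e d"
proof -
  fix e :: real assume e: "e > 0"
  obtain g where g: "continuous_on {0..1} g" "\<And>t. t \<in> {0..1} \<Longrightarrow> ((\<lambda>s. snd (w s)) has_vector_derivative g t) (at t within {0..1})"
    using assms unfolding C1y_def by blast
  show "\<exists>d>0. Cnd (\<lambda>s. snd (w s)) e d" by (rule C1_imp_Cnd[OF g(2) g(1) e])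
qed

lemma clamp01_bounds[simp]: "0 \<le> clamp01 t" "clamp01 t \<le> 1"
  by (auto simp: clamp01_def)

lemma clamp01_clamp01[simp]: "clamp01 (clamp01 t) = clamp01 t"
  by (auto simp: clamp01_def)

lemma continuous_clamp01: "continuous_on A clamp01"
  unfolding clamp01_def by (intro continuous_intros)

lemma d2_eq:
  assumes "w \<in> C1y"
  shows "d2 w t = glim (\<lambda>s. snd (w s)) (clamp01 t)"
proof -
  have "((\<lambda>s. snd (w s)) has_vector_derivative glim (\<lambda>s. snd (w s)) (clamp01 t)) (at (clamp01 t) within {0..1})"
    by (rule Cnd_deriv[OF C1y_H[OF assms] clamp01_in])
  then have "vector_derivative (\<lambda>s. snd (w s)) (at (clamp01 t) within {0..1}) = glim (\<lambda>s. snd (w s)) (clamp01 t)"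
    by (intro vector_derivative_within_closed_interval) (auto simp: clamp01_in)
  then show ?thesis using assms by (simp add: d2_def)
qed

lemma d2_Cpaths:
  fixes w :: "real \<Rightarrow> 'a::euclidean_space \<times> 'a"
  shows "d2 w \<in> Cpaths"
proof (cases "w \<in> C1y")
  case True
  have "continuous_on {0..1} (\<lambda>t. glim (\<lambda>s. snd (w s)) (clamp01 t))"
    by (rule continuous_on_compose2[OF Cnd_cont[OF C1y_H[OF True]] continuous_clamp01]) auto
  then show ?thesis using True by (simp add: Cpaths_def d2_eq clamp01_clamp01)
next
  case False
  then show ?thesis by (simp add: Cpaths_def d2_def)
qed

lemma snd_ev_measurable[measurable]:
  "(\<lambda>w. snd (w t)) \<in> borel_measurable (Cborel :: (real \<Rightarrow> 'a::euclidean_space \<times> 'a) measure)"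
  using measurable_compose[OF ev_measurable'[of t] borel_measurable_continuous_onI[OF continuous_on_snd[OF continuous_on_id]]]
  by simp

lemma fst_ev_measurable[measurable]:
  "(\<lambda>w. fst (w t)) \<in> borel_measurable (Cborel :: (real \<Rightarrow> 'a::euclidean_space \<times> 'a) measure)"
  using measurable_compose[OF ev_measurable'[of t] borel_measurable_continuous_onI[OF continuous_on_fst[OF continuous_on_id]]]
  by simp

lemma d2_measurable:
  "(d2 :: (real \<Rightarrow> 'b::euclidean_space \<times> 'b) \<Rightarrow> (real \<Rightarrow> 'b)) \<in> measurable Cborel Cborel"
proof (rule measurable_CborelI)
  show "\<And>x. d2 x \<in> Cpaths" by (rule d2_Cpaths)
  fix t :: real
  define c where "c = clamp01 t"
  have c: "c \<in> {0..1}" by (simp add: c_def clamp01_in)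
  define f where "f n w = (if w \<in> C1y then DQ (\<lambda>s. snd (w s)) c (uu n c) else 0)"
    for n and w :: "real \<Rightarrow> 'b \<times> 'b"
  have meas: "f n \<in> borel_measurable Cborel" for n
  proof -
    have "(\<lambda>w :: real \<Rightarrow> 'b \<times> 'b. DQ (\<lambda>s. snd (w s)) c (uu n c)) \<in> borel_measurable Cborel"
      unfolding DQ_def by measurable
    then show "f n \<in> borel_measurable Cborel"
    proof (unfold f_def, intro measurable_If_set)
      show "C1y \<inter> space Cborel \<in> sets Cborel" by (rule sets.Int[OF C1y_measurable sets.top])
    qed auto
  qed
  have lim: "(\<lambda>n. f n w) \<longlonglongrightarrow> d2 w t" for w
  proof (cases "w \<in> C1y")
    case True
    then show ?thesis
      using Cnd_conv[OF C1y_H[OF True] c] by (simp add: f_def d2_eq c_def)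
  next
    case False
    then show ?thesis by (simp add: f_def d2_def)
  qed
  show "(\<lambda>w :: real \<Rightarrow> 'b \<times> 'b. d2 w t) \<in> borel_measurable Cborel"
    by (rule borel_measurable_LIMSEQ_metric[OF meas lim])
qed

definition pairpath :: "(real \<Rightarrow> 'a) \<Rightarrow> 'a \<Rightarrow> real \<Rightarrow> 'a \<times> 'a" where
  "pairpath \<theta> z = (\<lambda>t. (\<theta> t, z))"

lemma pairpath_Cpaths:
  fixes \<theta> :: "real \<Rightarrow> 'a::euclidean_space"
  assumes "\<theta> \<in> Cpaths"
  shows "pairpath \<theta> z \<in> Cpaths"
proof -
  have "continuous_on {0..1} (\<lambda>t. (\<theta> t, z))"
    using Cpaths_cont[OF assms] by (intro continuous_intros)
  moreover have "\<And>t. (\<theta> t, z) = (\<theta> (clamp01 t), z)" using Cpaths_clamp[OF assms] by metis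
  ultimately show ?thesis by (simp add: Cpaths_def pairpath_def)
qed

lemma pairpath_measurable:
  "(\<lambda>(\<theta>, z). pairpath \<theta> z) \<in> measurable (Cborel \<Otimes>\<^sub>M borel) (Cborel :: (real \<Rightarrow> 'a::euclidean_space \<times> 'a) measure)"
proof (rule measurable_CborelI)
  fix x :: "(real \<Rightarrow> 'a) \<times> 'a" assume "x \<in> space (Cborel \<Otimes>\<^sub>M borel)"
  then have "fst x \<in> Cpaths" by (auto simp: space_pair_measure space_Cborel)
  then show "(case x of (\<theta>, z) \<Rightarrow> pairpath \<theta> z) \<in> Cpaths"
    using pairpath_Cpaths by (cases x) auto
next
  fix t :: real
  have "(\<lambda>x :: (real \<Rightarrow> 'a) \<times> 'a. (fst x t, snd x)) \<in> borel_measurable (Cborel \<Otimes>\<^sub>M borel)"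
    by (intro borel_measurable_Pair measurable_compose[OF measurable_fst ev_measurable'] measurable_snd)
  then show "(\<lambda>x :: (real \<Rightarrow> 'a) \<times> 'a. (case x of (\<theta>, z) \<Rightarrow> pairpath \<theta> z) t) \<in> borel_measurable (Cborel \<Otimes>\<^sub>M borel)"
    by (simp add: pairpath_def case_prod_beta)
qed

lemma pairpath_measurable2:
  fixes \<theta> :: "real \<Rightarrow> 'a::euclidean_space"
  assumes "\<theta> \<in> Cpaths"
  shows "pairpath \<theta> \<in> measurable borel Cborel"
proof (rule measurable_CborelI)
  show "\<And>z. pairpath \<theta> z \<in> Cpaths" using pairpath_Cpaths[OF assms] by auto
  fix t :: real
  show "(\<lambda>z. pairpath \<theta> z t) \<in> borel_measurable borel"
    by (simp add: pairpath_def)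
qed

lemma p1_measurable: "(p1 :: (real \<Rightarrow> 'a::euclidean_space \<times> 'a) \<Rightarrow> _) \<in> measurable Cborel Cborel"
proof (rule measurable_CborelI)
  fix w :: "real \<Rightarrow> 'a \<times> 'a" assume "w \<in> space Cborel"
  then have w: "w \<in> Cpaths" by (simp add: space_Cborel)
  have "continuous_on {0..1} (\<lambda>t. fst (w t))"
    using Cpaths_cont[OF w] by (intro continuous_intros)
  moreover have "\<And>t. fst (w t) = fst (w (clamp01 t))" using Cpaths_clamp[OF w] by metis
  ultimately show "p1 w \<in> Cpaths" by (simp add: Cpaths_def p1_def)
next
  fix t :: real
  show "(\<lambda>w :: real \<Rightarrow> 'a \<times> 'a. p1 w t) \<in> borel_measurable Cborel"
    by (simp add: p1_def)
qed

lemma p1_pairpath[simp]: "p1 (pairpath \<theta> z) = \<theta>"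
  by (simp add: p1_def pairpath_def)

lemma pairpath_C1y:
  fixes \<theta> :: "real \<Rightarrow> 'a::euclidean_space"
  assumes "\<theta> \<in> Cpaths"
  shows "pairpath \<theta> z \<in> C1y" "d2 (pairpath \<theta> z) = (\<lambda>t. 0)"
proof -
  have d: "((\<lambda>s. snd (pairpath \<theta> z s)) has_vector_derivative 0) (at t within {0..1})" for t
    by (simp add: pairpath_def)
  show C: "pairpath \<theta> z \<in> C1y"
    unfolding C1y_def using pairpath_Cpaths[OF assms] d
    by (auto intro!: exI[of _ "\<lambda>_. 0"])
  have "vector_derivative (\<lambda>s. snd (pairpath \<theta> z s)) (at (clamp01 t) within {0..1}) = 0" for t
    by (rule vector_derivative_within_closed_interval[OF _ _ d]) auto
  then show "d2 (pairpath \<theta> z) = (\<lambda>t. 0)"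
    using C by (simp add: d2_def)
qed

lemma zero_path_Cpaths: "(\<lambda>t. 0 :: 'a::euclidean_space) \<in> Cpaths"
  by (simp add: Cpaths_def)

lemma C1y_Collect: "{x \<in> space (Cborel :: (real \<Rightarrow> 'a::euclidean_space \<times> 'a) measure). x \<in> C1y} \<in> sets Cborel"
proof -
  have "{x \<in> space (Cborel :: (real \<Rightarrow> 'a \<times> 'a) measure). x \<in> C1y} = C1y"
    by (auto simp: space_Cborel C1y_def)
  then show ?thesis using C1y_measurable by simp
qed

lemma existence:
  fixes \<mu> :: "'a::euclidean_space measure" and \<psi> :: "'a \<Rightarrow> 'a measure" and \<eta> :: "(real \<Rightarrow> 'a) measure"
  assumes \<psi>: "\<psi> \<in> measurable borel (prob_algebra borel)" and \<eta>: "is_path_prob \<eta>"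
    and \<mu>: "distr \<eta> borel (ev 0) = \<mu>"
  shows "parallel_transport \<mu> \<psi> \<eta> (\<eta> \<bind> (\<lambda>\<theta>. distr (\<psi> (\<theta> 0)) Cborel (pairpath \<theta>)))"
proof -
  define K where "K \<theta> = distr (\<psi> (\<theta> 0)) Cborel (pairpath \<theta>)" for \<theta> :: "real \<Rightarrow> 'a"
  have s\<eta>: "sets \<eta> = sets Cborel" "space \<eta> = Cpaths" "prob_space \<eta>"
    using \<eta> by (auto simp: is_path_prob_def)
  have ne: "space \<eta> \<noteq> {}" using prob_space.not_empty[OF s\<eta>(3)] .
  have \<psi>0: "(\<lambda>\<theta>. \<psi> (\<theta> 0)) \<in> (Cborel :: (real \<Rightarrow> 'a) measure) \<rightarrow>\<^sub>M prob_algebra borel"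
    using measurable_compose[OF ev_measurable' \<psi>] .
  have Kp: "K \<in> Cborel \<rightarrow>\<^sub>M prob_algebra (Cborel :: (real \<Rightarrow> 'a \<times> 'a) measure)"
    unfolding K_def by (rule measurable_distr_prob_space2[OF \<psi>0 pairpath_measurable])
  have Kc: "K \<in> Cborel \<rightarrow>\<^sub>M subprob_algebra (Cborel :: (real \<Rightarrow> 'a \<times> 'a) measure)"
    by (rule measurable_prob_algebraD[OF Kp])
  have K\<eta>: "K \<in> \<eta> \<rightarrow>\<^sub>M subprob_algebra (Cborel :: (real \<Rightarrow> 'a \<times> 'a) measure)"
    using Kc measurable_cong_sets[OF s\<eta>(1) refl] by blast
  have \<eta>sp: "\<eta> \<in> space (prob_algebra Cborel)" using s\<eta> by (simp add: space_prob_algebra)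
  define \<Psi> where "\<Psi> = \<eta> \<bind> K"
  have P\<Psi>: "prob_space \<Psi>" unfolding \<Psi>_def by (rule prob_space_bind'[OF \<eta>sp Kp])
  have s\<Psi>: "sets \<Psi> = sets Cborel" unfolding \<Psi>_def by (rule sets_bind'[OF \<eta>sp Kp])
  have sp\<Psi>: "space \<Psi> = Cpaths" using sets_eq_imp_space_eq[OF s\<Psi>] space_Cborel by simp
  have \<psi>sets: "sets (\<psi> x) = sets borel" "prob_space (\<psi> x)" for x
    using measurable_space[OF \<psi>, of x] by (auto simp: space_prob_algebra)
  have Kdistr: "distr (K \<theta>) N g = distr (\<psi> (\<theta> 0)) N (g \<circ> pairpath \<theta>)"
    if "\<theta> \<in> Cpaths" "g \<in> measurable Cborel N" for \<theta> and N :: "'c measure" and g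
  proof -
    have "pairpath \<theta> \<in> measurable (\<psi> (\<theta> 0)) Cborel"
      using pairpath_measurable2[OF that(1)] measurable_cong_sets[OF \<psi>sets(1) refl] by blast
    then show ?thesis unfolding K_def by (rule distr_distr[OF that(2)])
  qed
  have "AE w in \<Psi>. w \<in> C1y"
    unfolding \<Psi>_def
  proof (subst AE_bind[OF K\<eta>])
    show "Measurable.pred Cborel (\<lambda>w. w \<in> C1y)"
      unfolding pred_def by (rule C1y_Collect)
    show "AE \<theta> in \<eta>. AE w in K \<theta>. w \<in> C1y"
    proof (rule AE_I2)
      fix \<theta> assume "\<theta> \<in> space \<eta>"
      then have \<theta>: "\<theta> \<in> Cpaths" using s\<eta> by simp
      have "(AE w in K \<theta>. w \<in> C1y) \<longleftrightarrow> (AE z in \<psi> (\<theta> 0). pairpath \<theta> z \<in> C1y)"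
        unfolding K_def
      proof (rule AE_distr_iff)
        show "pairpath \<theta> \<in> \<psi> (\<theta> 0) \<rightarrow>\<^sub>M Cborel"
          using pairpath_measurable2[OF \<theta>] measurable_cong_sets[OF \<psi>sets(1) refl] by blast
        show "{x \<in> space Cborel. x \<in> C1y} \<in> sets Cborel"
          by (rule C1y_Collect)
      qed
      then show "AE w in K \<theta>. w \<in> C1y" using pairpath_C1y(1)[OF \<theta>] by simp
    qed
  qed
  moreover have "distr \<Psi> Cborel p1 = \<eta>"
  proof -
    have "distr \<Psi> Cborel p1 = \<eta> \<bind> (\<lambda>\<theta>. distr (K \<theta>) Cborel p1)"
      unfolding \<Psi>_def by (rule distr_bind[OF K\<eta> ne p1_measurable])
    also have "\<dots> = \<eta> \<bind> return Cborel"
    proof (rule bind_cong[OF refl])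
      fix \<theta> assume "\<theta> \<in> space \<eta>"
      then have \<theta>: "\<theta> \<in> Cpaths" using s\<eta> by simp
      have "distr (K \<theta>) Cborel p1 = distr (\<psi> (\<theta> 0)) Cborel (\<lambda>_. \<theta>)"
        using Kdistr[OF \<theta> p1_measurable] by (simp add: comp_def)
      also have "\<dots> = return Cborel \<theta>"
        by (rule prob_space.distr_const[OF \<psi>sets(2)]) (simp add: space_Cborel \<theta>)
      finally show "distr (K \<theta>) Cborel p1 = return Cborel \<theta>" .
    qed
    also have "\<dots> = \<eta>" by (rule bind_return''[OF s\<eta>(1)])
    finally show ?thesis .
  qed
  moreover have "distr \<Psi> Cborel d2 = return Cborel (\<lambda>t. 0)"
  proof -
    have "distr \<Psi> Cborel d2 = \<eta> \<bind> (\<lambda>\<theta>. distr (K \<theta>) Cborel d2)"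
      unfolding \<Psi>_def by (rule distr_bind[OF K\<eta> ne d2_measurable])
    also have "\<dots> = \<eta> \<bind> (\<lambda>_. return Cborel (\<lambda>t. 0))"
    proof (rule bind_cong[OF refl])
      fix \<theta> assume "\<theta> \<in> space \<eta>"
      then have \<theta>: "\<theta> \<in> Cpaths" using s\<eta> by simp
      have "distr (K \<theta>) Cborel d2 = distr (\<psi> (\<theta> 0)) Cborel (\<lambda>_. (\<lambda>t. 0))"
        using Kdistr[OF \<theta> d2_measurable] pairpath_C1y(2)[OF \<theta>] by (simp add: comp_def)
      also have "\<dots> = return Cborel (\<lambda>t. 0)"
        by (rule prob_space.distr_const[OF \<psi>sets(2)]) (simp add: space_Cborel zero_path_Cpaths)
      finally show "distr (K \<theta>) Cborel d2 = return Cborel (\<lambda>t. 0)" .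
    qed
    also have "\<dots> = return Cborel (\<lambda>t. 0)"
      using zero_path_Cpaths by (intro bind_const'[OF s\<eta>(3)] subprob_space_return) (simp add: space_Cborel)
    finally show ?thesis .
  qed
  moreover have "distr \<Psi> borel (ev 0) = joint \<mu> \<psi>"
  proof -
    define G where "G x = distr (\<psi> x) borel (\<lambda>z. (x, z))" for x
    have Gm: "G \<in> borel \<rightarrow>\<^sub>M subprob_algebra borel"
      unfolding G_def
    proof (rule measurable_distr2[OF _ measurable_prob_algebraD[OF \<psi>]])
      show "(\<lambda>(x, z). (x, z)) \<in> borel \<Otimes>\<^sub>M borel \<rightarrow>\<^sub>M (borel :: ('a \<times> 'a) measure)"
        by (simp add: borel_prod)
    qed
    have "distr \<Psi> borel (ev 0) = \<eta> \<bind> (\<lambda>\<theta>. distr (K \<theta>) borel (ev 0))"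
      unfolding \<Psi>_def by (rule distr_bind[OF K\<eta> ne ev_measurable])
    also have "\<dots> = \<eta> \<bind> (\<lambda>\<theta>. G (ev 0 \<theta>))"
    proof (rule bind_cong[OF refl])
      fix \<theta> assume "\<theta> \<in> space \<eta>"
      then have \<theta>: "\<theta> \<in> Cpaths" using s\<eta> by simp
      show "distr (K \<theta>) borel (ev 0) = G (ev 0 \<theta>)"
        using Kdistr[OF \<theta> ev_measurable] by (simp add: comp_def G_def ev_def pairpath_def)
    qed
    also have "\<dots> = distr \<eta> borel (ev 0) \<bind> G"
      using bind_distr[OF _ Gm ne, of "ev 0"] ev_measurable measurable_cong_sets[OF s\<eta>(1) refl] by metis
    also have "\<dots> = joint \<mu> \<psi>"
      by (simp add: \<mu> joint_def G_def[abs_def])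
    finally show ?thesis .
  qed
  ultimately show ?thesis
    using P\<Psi> s\<Psi> sp\<Psi> unfolding parallel_transport_def is_path_prob_def \<Psi>_def K_def by auto
qed

lemma borel_snd: "(\<lambda>p :: 'a::topological_space \<times> 'b::topological_space. snd p) \<in> borel_measurable borel"
  by (rule borel_measurable_continuous_onI[OF continuous_on_snd[OF continuous_on_id]])

lemma borel_fst: "(\<lambda>p :: 'a::topological_space \<times> 'b::topological_space. fst p) \<in> borel_measurable borel"
  by (rule borel_measurable_continuous_onI[OF continuous_on_fst[OF continuous_on_id]])

lemma zero_singleton_Cborel: "{(\<lambda>t. 0 :: 'a::euclidean_space)} \<in> sets Cborel"
proof (rule closedI_Cborel)
  show "{(\<lambda>t. 0 :: 'a)} \<subseteq> Cpaths" using zero_path_Cpaths by auto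
  fix w :: "real \<Rightarrow> 'a" assume w: "w \<in> Cpaths" "w \<notin> {\<lambda>t. 0}"
  then obtain t where t: "w t \<noteq> 0" by auto
  show "\<exists>e>0. \<forall>w'\<in>Cpaths. sup_dist w w' < e \<longrightarrow> w' \<notin> {\<lambda>t. 0}"
  proof (intro exI[of _ "norm (w t)"] conjI ballI impI)
    show "norm (w t) > 0" using t by simp
    fix w' assume w': "w' \<in> Cpaths" "sup_dist w w' < norm (w t)"
    then have "dist (w t) (w' t) < norm (w t)" using dist_le_sup_dist[OF w(1) w'(1), of t] by linarith
    then show "w' \<notin> {\<lambda>t. 0}" by auto
  qed
qed

lemma pt_basic:
  assumes "parallel_transport \<mu> \<psi> \<eta> \<Psi>"
  shows "sets \<Psi> = sets Cborel" "space \<Psi> = Cpaths" "prob_space \<Psi>"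
  using assms by (auto simp: parallel_transport_def is_path_prob_def)

lemma const_of_d2_zero:
  fixes w :: "real \<Rightarrow> 'a::euclidean_space \<times> 'a"
  assumes "w \<in> C1y" "d2 w = (\<lambda>t. 0)"
  shows "snd (w t) = snd (w 0)"
proof -
  obtain g where g: "continuous_on {0..1} g"
    "\<And>s. s \<in> {0..1} \<Longrightarrow> ((\<lambda>s. snd (w s)) has_vector_derivative g s) (at s within {0..1})"
    using assms(1) unfolding C1y_def by blast
  have w: "w \<in> Cpaths" using assms(1) by (simp add: C1y_def)
  have g0: "g s = 0" if s: "s \<in> {0..1}" for s
  proof -
    have "vector_derivative (\<lambda>s. snd (w s)) (at s within {0..1}) = g s"
      by (rule vector_derivative_within_closed_interval[OF _ s g(2)[OF s]]) simp
    moreover have "d2 w s = vector_derivative (\<lambda>s. snd (w s)) (at s within {0..1})"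
      using assms(1) s by (simp add: d2_def clamp01_id)
    moreover have "d2 w s = 0" using assms(2) by simp
    ultimately show ?thesis by simp
  qed
  have "\<exists>c. \<forall>x\<in>{0..1}. snd (w x) = c"
  proof (rule has_derivative_zero_constant)
    fix x :: real assume x: "x \<in> {0..1}"
    show "((\<lambda>s. snd (w s)) has_derivative (\<lambda>h. 0)) (at x within {0..1})"
      using g(2)[OF x] g0[OF x] by (simp add: has_vector_derivative_def)
  qed simp
  then obtain c where c: "\<And>x. x \<in> {0..1} \<Longrightarrow> snd (w x) = c" by blast
  have "snd (w t) = snd (w (clamp01 t))" using Cpaths_clamp[OF w] by metis
  also have "\<dots> = c" using c clamp01_in by blast
  also have "\<dots> = snd (w 0)" using c by simp
  finally show ?thesis .
qed

lemma pt_snd_const: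
  fixes \<Psi> :: "(real \<Rightarrow> 'a::euclidean_space \<times> 'a) measure"
  assumes pt: "parallel_transport \<mu> \<psi> \<eta> \<Psi>"
  shows "AE w in \<Psi>. \<forall>t. snd (w t) = snd (w 0)"
proof -
  note b = pt_basic[OF pt]
  have d2m: "d2 \<in> measurable \<Psi> Cborel"
    using d2_measurable measurable_cong_sets[OF b(1) refl] by blast
  have "AE x in distr \<Psi> Cborel d2. x = (\<lambda>t. 0 :: 'a)"
  proof -
    have E: "distr \<Psi> Cborel d2 = return Cborel (\<lambda>t. 0 :: 'a)"
      using pt by (simp add: parallel_transport_def)
    have A: "AE x in return Cborel (\<lambda>t. 0 :: 'a). x = (\<lambda>t. 0)"
    proof (subst AE_return)
      show "(\<lambda>t. 0 :: 'a) \<in> space Cborel" by (simp add: space_Cborel zero_path_Cpaths)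
      show "Measurable.pred Cborel (\<lambda>x. x = (\<lambda>t. 0 :: 'a))"
      unfolding pred_def
    proof -
      have "{x \<in> space Cborel. x = (\<lambda>t. 0 :: 'a)} = {\<lambda>t. 0}"
        by (auto simp: space_Cborel zero_path_Cpaths)
      then show "{x \<in> space Cborel. x = (\<lambda>t. 0 :: 'a)} \<in> sets Cborel"
        using zero_singleton_Cborel by simp
    qed
    qed simp
    show ?thesis unfolding E by (rule A)
  qed
  then have "AE w in \<Psi>. d2 w = (\<lambda>t. 0)" by (rule AE_distrD[OF d2m])
  moreover have "AE w in \<Psi>. w \<in> C1y" using pt by (simp add: parallel_transport_def)
  ultimately show ?thesis
  proof eventually_elim
    case (elim w)
    then show ?case using const_of_d2_zero[of w] by simp
  qed
qed

lemma unique_case1: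
  fixes \<mu> :: "'a::euclidean_space measure" and \<psi> :: "'a \<Rightarrow> 'a measure" and \<eta> :: "(real \<Rightarrow> 'a) measure"
  assumes pt: "parallel_transport \<mu> \<psi> \<eta> \<Psi>"
    and v[measurable]: "v \<in> borel_measurable borel" and \<psi>v: "\<And>x. \<psi> x = return borel (v x)"
    and \<mu>: "distr \<eta> borel (ev 0) = \<mu>"
  shows "\<Psi> = distr \<eta> Cborel (\<lambda>\<theta>. pairpath \<theta> (v (\<theta> 0)))"
proof -
  note b = pt_basic[OF pt]
  have sp\<mu>: "space \<mu> \<noteq> {}" using \<mu>[symmetric] by simp
  have s\<mu>: "sets \<mu> = sets borel" using \<mu>[symmetric] by simp
  have "joint \<mu> \<psi> = \<mu> \<bind> (\<lambda>x. return borel (x, v x))"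
    unfolding joint_def \<psi>v by (intro bind_cong refl) (simp add: distr_return)
  also have "\<dots> = distr \<mu> borel (\<lambda>x. (x, v x))"
    by (rule bind_return_distr'[OF sp\<mu>]) (simp add: measurable_cong_sets[OF s\<mu> refl])
  finally have J: "joint \<mu> \<psi> = distr \<mu> borel (\<lambda>x. (x, v x))" .
  have P: "Measurable.pred borel (\<lambda>p :: 'a \<times> 'a. snd p = v (fst p))"
    unfolding pred_def by (rule measurable_equality_set[OF borel_snd measurable_compose[OF borel_fst v]])
  have AJ: "AE p in joint \<mu> \<psi>. snd p = v (fst p)"
  proof -
    have m: "(\<lambda>x. (x, v x)) \<in> measurable \<mu> borel" by (simp add: measurable_cong_sets[OF s\<mu> refl])
    show ?thesis unfolding J by (subst AE_distr_iff[OF m P[unfolded pred_def]]) simp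
  qed
  have EJ: "distr \<Psi> borel (ev 0) = joint \<mu> \<psi>" using pt by (simp add: parallel_transport_def)
  have "AE p in distr \<Psi> borel (ev 0). snd p = v (fst p)" unfolding EJ by (rule AJ)
  moreover have "ev 0 \<in> measurable \<Psi> borel" using ev_measurable measurable_cong_sets[OF b(1) refl] by blast
  ultimately have A1: "AE w in \<Psi>. snd (ev 0 w) = v (fst (ev 0 w))"
    using AE_distrD by blast
  define H where "H \<theta> = pairpath \<theta> (v (\<theta> 0))" for \<theta> :: "real \<Rightarrow> 'a"
  have Hm: "H \<in> measurable Cborel Cborel"
  proof (rule measurable_CborelI)
    show "\<And>x. x \<in> space Cborel \<Longrightarrow> H x \<in> Cpaths"
      by (simp add: H_def space_Cborel pairpath_Cpaths)
    fix t :: real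
    show "(\<lambda>x. H x t) \<in> borel_measurable Cborel"
      unfolding H_def pairpath_def by measurable
  qed
  have p1m: "p1 \<in> measurable \<Psi> Cborel"
    using p1_measurable measurable_cong_sets[OF b(1) refl] by blast
  have "AE w in \<Psi>. w = H (p1 w)"
    using A1 pt_snd_const[OF pt]
  proof eventually_elim
    case (elim w)
    show ?case
      using elim by (auto simp: H_def pairpath_def p1_def ev_def fun_eq_iff prod_eq_iff)
  qed
  then have A: "distr \<Psi> Cborel (\<lambda>w. w) = distr \<Psi> Cborel (\<lambda>w. H (p1 w))"
  proof (intro distr_cong_AE refl)
    have "(\<lambda>w. H (p1 w)) \<in> measurable Cborel Cborel" using measurable_compose[OF p1_measurable Hm] by simp
    then show "(\<lambda>w. H (p1 w)) \<in> measurable \<Psi> Cborel" using measurable_cong_sets[OF b(1) refl] by blast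
    show "(\<lambda>w. w) \<in> measurable \<Psi> Cborel" by (rule measurable_ident_sets[OF b(1)])
  qed
  have B: "distr \<Psi> Cborel (\<lambda>w. w) = \<Psi>" by (rule distr_id2[OF b(1)[symmetric]])
  have C: "distr \<Psi> Cborel (\<lambda>w. H (p1 w)) = distr (distr \<Psi> Cborel p1) Cborel H"
    using distr_distr[OF Hm p1m] by (simp add: comp_def)
  have D: "distr \<Psi> Cborel p1 = \<eta>" using pt by (simp add: parallel_transport_def)
  have "\<Psi> = distr \<eta> Cborel H"
    using A B C D by (simp only:)
  then show ?thesis by (simp only: H_def[abs_def])
qed

lemma gronwall:
  fixes u :: "real \<Rightarrow> real" and c L :: real
  assumes u: "continuous_on {0..1} u" and L: "L > 0"
    and ineq: "\<And>t. t \<in> {0..1} \<Longrightarrow> u t \<le> c + L * integral {0..t} u"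
    and t: "t \<in> {0..1}"
  shows "u t \<le> c * exp (L * t)"
proof -
  define U where "U s = integral {0..s} u" for s
  define V where "V s = exp (- (L * s)) * (c + L * U s)" for s
  define D where "D s = exp (- (L * s)) * (- L) * (c + L * U s) + exp (- (L * s)) * (L * u s)" for s
  have dU: "(U has_real_derivative u s) (at s within {0..1})" if "s \<in> {0..1}" for s
    unfolding U_def by (rule integral_has_real_derivative[OF u that])
  have dV: "(V has_real_derivative D s) (at s within {0..1})" if "s \<in> {0..1}" for s
    unfolding V_def D_def
    by (rule derivative_eq_intros refl dU[OF that])+ simp
  have Dle: "D s \<le> 0" if "s \<in> {0..1}" for s
  proof -
    have "D s = exp (- (L * s)) * L * (u s - c - L * U s)" by (simp add: D_def algebra_simps)
    moreover have "u s - c - L * U s \<le> 0" using ineq[OF that] by (simp add: U_def)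
    ultimately show ?thesis using L by (simp add: mult_nonneg_nonpos)
  qed
  have "V t - V 0 \<le> 0"
  proof -
    have "\<exists>x\<in>{0..t}. V t - V 0 = (\<lambda>h. D x * h) (t - 0)"
    proof (rule mvt_very_simple)
      show "0 \<le> t" using t by simp
      fix x assume x: "0 \<le> x" "x \<le> t"
      then have "x \<in> {0..1}" using t by auto
      then have "(V has_real_derivative D x) (at x within {0..t})"
        using DERIV_subset[OF dV] t by auto
      then show "(V has_derivative (\<lambda>h. D x * h)) (at x within {0..t})"
        by (simp add: has_field_derivative_def)
    qed
    then obtain x where x: "x \<in> {0..t}" "V t - V 0 = D x * t" by auto
    have "x \<in> {0..1}" using x t by auto
    then have "D x * t \<le> 0" using Dle t by (simp add: mult_nonpos_nonneg)
    then show ?thesis using x by simp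
  qed
  moreover have "V 0 = c" by (simp add: V_def U_def)
  ultimately have "V t \<le> c" by linarith
  then have "exp (- (L * t)) * (c + L * U t) \<le> c" by (simp only: V_def)
  then have "exp (L * t) * (exp (- (L * t)) * (c + L * U t)) \<le> exp (L * t) * c"
    by (intro mult_left_mono) auto
  moreover have "exp (L * t) * (exp (- (L * t)) * (c + L * U t)) = c + L * U t"
    by (simp only: mult.assoc[symmetric] exp_minus_inverse mult_1)
  ultimately have "c + L * U t \<le> c * exp (L * t)"
    by (simp add: mult.commute)
  then show ?thesis using ineq[OF t] by (simp add: U_def)
qed

lemma Cpaths_borel:
  fixes \<theta> :: "real \<Rightarrow> 'a::euclidean_space"
  assumes "\<theta> \<in> Cpaths"
  shows "\<theta> \<in> borel_measurable borel" "continuous_on UNIV \<theta>"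
proof -
  have A: "continuous_on UNIV (\<lambda>s. \<theta> (clamp01 s))"
    by (rule continuous_on_compose2[OF Cpaths_cont[OF assms] continuous_clamp01]) auto
  have B: "(\<lambda>s. \<theta> (clamp01 s)) = \<theta>"
    by (rule ext) (rule Cpaths_clamp[OF assms, symmetric])
  show "continuous_on UNIV \<theta>" using A unfolding B .
  then show "\<theta> \<in> borel_measurable borel" by (rule borel_measurable_continuous_onI)
qed

lemma ode_integrable:
  fixes f :: "real \<Rightarrow> 'a::euclidean_space \<Rightarrow> 'a" and \<theta> :: "real \<Rightarrow> 'a"
  assumes fm: "(\<lambda>(t, x). f t x) \<in> borel_measurable borel"
    and fC: "\<forall>t\<in>{0..1}. \<forall>x. norm (f t x) \<le> C"
    and \<theta>: "\<theta> \<in> Cpaths" and t: "t \<in> {0..1}"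
  shows "(\<lambda>s. f s (\<theta> s)) \<in> borel_measurable borel"
    "set_integrable lborel {0..t} (\<lambda>s. f s (\<theta> s))"
    "(\<lambda>s. f s (\<theta> s)) integrable_on {0..t}"
    "(LINT s:{0..t}|lborel. f s (\<theta> s)) = integral {0..t} (\<lambda>s. f s (\<theta> s))"
proof -
  have "(\<lambda>s. (s, \<theta> s)) \<in> borel_measurable borel"
    by (intro borel_measurable_Pair borel_measurable_continuous_onI[OF continuous_on_id] Cpaths_borel(1)[OF \<theta>])
  from measurable_compose[OF this fm]
  show m: "(\<lambda>s. f s (\<theta> s)) \<in> borel_measurable borel" by simp
  show si: "set_integrable lborel {0..t} (\<lambda>s. f s (\<theta> s))"
    unfolding set_integrable_def
  proof (rule integrableI_bounded_set[where A = "{0..t}" and B = C])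
    show "{0..t} \<in> sets lborel" by simp
    show "(\<lambda>s. indicator {0..t} s *\<^sub>R f s (\<theta> s)) \<in> borel_measurable lborel"
      using m by simp
    show "emeasure lborel {0..t} < \<infinity>" using t by simp
    show "AE x in lborel. x \<in> {0..t} \<longrightarrow> norm (indicator {0..t} x *\<^sub>R f x (\<theta> x)) \<le> C"
      using fC t by (intro AE_I2) (auto simp: indicator_def)
    show "AE x in lborel. x \<notin> {0..t} \<longrightarrow> indicator {0..t} x *\<^sub>R f x (\<theta> x) = 0"
      by (intro AE_I2) auto
  qed
  show "(\<lambda>s. f s (\<theta> s)) integrable_on {0..t}"
    "(LINT s:{0..t}|lborel. f s (\<theta> s)) = integral {0..t} (\<lambda>s. f s (\<theta> s))"
    using set_borel_integral_eq_integral[OF si] by auto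
qed

lemma ode_estimate:
  fixes f :: "real \<Rightarrow> 'a::euclidean_space \<Rightarrow> 'a" and \<theta> \<theta>' :: "real \<Rightarrow> 'a"
  assumes fm: "(\<lambda>(t, x). f t x) \<in> borel_measurable borel"
    and fC: "\<forall>t\<in>{0..1}. \<forall>x. norm (f t x) \<le> C"
    and fL: "\<forall>t\<in>{0..1}. L-lipschitz_on UNIV (f t)"
    and \<theta>: "\<theta> \<in> Cpaths" "\<forall>t\<in>{0..1}. \<theta> t = \<theta> 0 + (\<integral>s\<in>{0..t}. f s (\<theta> s) \<partial>lborel)"
    and \<theta>': "\<theta>' \<in> Cpaths" "\<forall>t\<in>{0..1}. \<theta>' t = \<theta>' 0 + (\<integral>s\<in>{0..t}. f s (\<theta>' s) \<partial>lborel)"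
    and t: "t \<in> {0..1}"
  shows "norm (\<theta> t - \<theta>' t) \<le> norm (\<theta> 0 - \<theta>' 0) * exp (L + 1)"
proof -
  have L0: "L \<ge> 0" using fL lipschitz_on_nonneg[of L UNIV "f 0"] by auto
  define u where "u s = norm (\<theta> s - \<theta>' s)" for s
  have uc: "continuous_on {0..1} u"
    unfolding u_def using Cpaths_cont[OF \<theta>(1)] Cpaths_cont[OF \<theta>'(1)] by (intro continuous_intros)
  have ineq: "u s \<le> u 0 + (L + 1) * integral {0..s} u" if s: "s \<in> {0..1}" for s
  proof -
    note I = ode_integrable[OF fm fC \<theta>(1) s] and I' = ode_integrable[OF fm fC \<theta>'(1) s]
    have sub: "{0..s} \<subseteq> {0..1}" using s by auto
    have ui: "u integrable_on {0..s}"
      using uc sub by (intro integrable_continuous_real) (auto intro: continuous_on_subset)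
    have e1: "\<theta> s = \<theta> 0 + integral {0..s} (\<lambda>r. f r (\<theta> r))"
      using bspec[OF \<theta>(2) s] unfolding I(4) .
    have e2: "\<theta>' s = \<theta>' 0 + integral {0..s} (\<lambda>r. f r (\<theta>' r))"
      using bspec[OF \<theta>'(2) s] unfolding I'(4) .
    have "\<theta> s - \<theta>' s = (\<theta> 0 - \<theta>' 0) + (integral {0..s} (\<lambda>r. f r (\<theta> r)) - integral {0..s} (\<lambda>r. f r (\<theta>' r)))"
      by (subst e1, subst e2) (simp add: algebra_simps)
    also have "\<dots> = (\<theta> 0 - \<theta>' 0) + integral {0..s} (\<lambda>r. f r (\<theta> r) - f r (\<theta>' r))"
      using integral_diff[OF I(3) I'(3)] by simp
    finally have eq: "\<theta> s - \<theta>' s = (\<theta> 0 - \<theta>' 0) + integral {0..s} (\<lambda>r. f r (\<theta> r) - f r (\<theta>' r))" .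
    have "norm (integral {0..s} (\<lambda>r. f r (\<theta> r) - f r (\<theta>' r))) \<le> integral {0..s} (\<lambda>r. L * u r)"
    proof (rule Henstock_Kurzweil_Integration.integral_norm_bound_integral)
      show "(\<lambda>r. f r (\<theta> r) - f r (\<theta>' r)) integrable_on {0..s}" using I(3) I'(3) by (rule integrable_diff)
      show "(\<lambda>r. L * u r) integrable_on {0..s}" using ui by (rule integrable_on_mult_right)
      fix r assume r: "r \<in> {0..s}"
      then have "r \<in> {0..1}" using sub by auto
      then have "dist (f r (\<theta> r)) (f r (\<theta>' r)) \<le> L * dist (\<theta> r) (\<theta>' r)"
        using lipschitz_onD[OF bspec[OF fL], of r "\<theta> r" "\<theta>' r"] by simp
      then show "norm (f r (\<theta> r) - f r (\<theta>' r)) \<le> L * u r" by (simp add: dist_norm u_def)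
    qed
    also have "\<dots> = L * integral {0..s} u" by simp
    also have "\<dots> \<le> (L + 1) * integral {0..s} u"
    proof -
      have "0 \<le> integral {0..s} u"
        using ui by (rule Henstock_Kurzweil_Integration.integral_nonneg) (simp add: u_def)
      then show ?thesis by (simp add: algebra_simps)
    qed
    finally have "norm (integral {0..s} (\<lambda>r. f r (\<theta> r) - f r (\<theta>' r))) \<le> (L + 1) * integral {0..s} u" .
    then show ?thesis
      using eq norm_triangle_ineq[of "\<theta> 0 - \<theta>' 0" "integral {0..s} (\<lambda>r. f r (\<theta> r) - f r (\<theta>' r))"]
      by (simp add: u_def)
  qed
  have "u t \<le> u 0 * exp ((L + 1) * t)"
    by (rule gronwall[OF uc _ ineq t]) (use L0 in auto)
  also have "\<dots> \<le> u 0 * exp (L + 1)"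
  proof (rule mult_left_mono)
    show "exp ((L + 1) * t) \<le> exp (L + 1)" using t L0 by (simp add: mult_left_le)
  qed (simp add: u_def)
  finally show ?thesis by (simp add: u_def)
qed

lemma unique_case2:
  fixes \<mu> :: "'a::euclidean_space measure" and \<psi> :: "'a \<Rightarrow> 'a measure" and \<eta> :: "(real \<Rightarrow> 'a) measure"
    and f :: "real \<Rightarrow> 'a \<Rightarrow> 'a"
  assumes pt1: "parallel_transport \<mu> \<psi> \<eta> \<Psi>1" and pt2: "parallel_transport \<mu> \<psi> \<eta> \<Psi>2"
    and fm: "(\<lambda>(t, x). f t x) \<in> borel_measurable borel"
    and fC: "\<forall>t\<in>{0..1}. \<forall>x. norm (f t x) \<le> C"
    and fL: "\<forall>t\<in>{0..1}. L-lipschitz_on UNIV (f t)"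
    and AE\<eta>: "AE \<theta> in \<eta>. \<forall>t\<in>{0..1}. \<theta> t = \<theta> 0 + (\<integral>s\<in>{0..t}. f s (\<theta> s) \<partial>lborel)"
    and \<eta>: "is_path_prob \<eta>"
  shows "\<Psi>1 = \<Psi>2"
proof -
  define S where "S = {\<theta> \<in> Cpaths. \<forall>t\<in>{0..1}. \<theta> t = \<theta> 0 + (\<integral>s\<in>{0..t}. f s (\<theta> s) \<partial>lborel)}"
  define D where "D = (\<lambda>\<theta>. \<theta> 0) ` S"
  define K where "K = exp (L + 1)"
  have K0: "K \<ge> 0" by (simp add: K_def)
  have est: "norm (\<theta> t - \<theta>' t) \<le> norm (\<theta> 0 - \<theta>' 0) * K" if "\<theta> \<in> S" "\<theta>' \<in> S" "t \<in> {0..1}" for \<theta> \<theta>' t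
  proof -
    have a: "\<theta> \<in> Cpaths" "\<forall>t\<in>{0..1}. \<theta> t = \<theta> 0 + (\<integral>s\<in>{0..t}. f s (\<theta> s) \<partial>lborel)"
      using that(1) unfolding S_def by blast+
    have b: "\<theta>' \<in> Cpaths" "\<forall>t\<in>{0..1}. \<theta>' t = \<theta>' 0 + (\<integral>s\<in>{0..t}. f s (\<theta>' s) \<partial>lborel)"
      using that(2) unfolding S_def by blast+
    show ?thesis using ode_estimate[OF fm fC fL a b that(3)] unfolding K_def .
  qed
  define \<Phi> where "\<Phi> t x = (SOME \<theta>. \<theta> \<in> S \<and> \<theta> 0 = x) t" for t x
  have \<Phi>_eq: "\<Phi> t (\<theta> 0) = \<theta> t" if \<theta>: "\<theta> \<in> S" and t: "t \<in> {0..1}" for \<theta> t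
  proof -
    define \<theta>' where "\<theta>' = (SOME \<theta>'. \<theta>' \<in> S \<and> \<theta>' 0 = \<theta> 0)"
    have \<theta>': "\<theta>' \<in> S" "\<theta>' 0 = \<theta> 0" unfolding \<theta>'_def using someI[of "\<lambda>\<theta>'. \<theta>' \<in> S \<and> \<theta>' 0 = \<theta> 0" \<theta>] \<theta> by auto
    have "norm (\<theta>' t - \<theta> t) \<le> 0" using est[OF \<theta>'(1) \<theta> t] \<theta>'(2) by simp
    then show ?thesis by (simp add: \<Phi>_def \<theta>'_def[symmetric])
  qed
  have \<Phi>_lip: "K-lipschitz_on D (\<Phi> t)" if t: "t \<in> {0..1}" for t
  proof (rule lipschitz_onI[OF _ K0])
    fix x y assume "x \<in> D" "y \<in> D"
    then obtain \<theta> \<theta>' where th: "\<theta> \<in> S" "\<theta>' \<in> S" "x = \<theta> 0" "y = \<theta>' 0" by (auto simp: D_def)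
    show "dist (\<Phi> t x) (\<Phi> t y) \<le> K * dist x y"
      using est[OF th(1,2) t] \<Phi>_eq[OF th(1) t] \<Phi>_eq[OF th(2) t] th by (simp add: dist_norm mult.commute)
  qed
  have "\<forall>t. \<exists>g. t \<in> {0..1} \<longrightarrow> K-lipschitz_on (closure D) g \<and> (\<forall>x\<in>D. g x = \<Phi> t x)"
    using lipschitz_extend_closure[OF \<Phi>_lip] by blast
  then obtain G where G: "\<And>t. t \<in> {0..1} \<Longrightarrow> K-lipschitz_on (closure D) (G t) \<and> (\<forall>x\<in>D. G t x = \<Phi> t x)"
    by metis
  define \<Phi>' where "\<Phi>' t x = indicator (closure D) x *\<^sub>R G (clamp01 t) x" for t x
  have \<Phi>'_meas: "\<Phi>' t \<in> borel_measurable borel" for t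
  proof -
    have "continuous_on (closure D) (G (clamp01 t))"
      using G[OF clamp01_in] by (auto intro: lipschitz_on_continuous_on)
    then show ?thesis unfolding \<Phi>'_def
      by (intro borel_measurable_continuous_on_indicator) auto
  qed
  have \<Phi>'_eq: "\<Phi>' t (\<theta> 0) = \<theta> t" if \<theta>: "\<theta> \<in> S" for \<theta> t
  proof -
    have D: "\<theta> 0 \<in> D" using \<theta> by (auto simp: D_def)
    then have "\<Phi>' t (\<theta> 0) = \<Phi> (clamp01 t) (\<theta> 0)"
    proof -
      have "\<theta> 0 \<in> closure D" using D closure_subset by blast
      then show ?thesis using G[OF clamp01_in] D by (simp add: \<Phi>'_def)
    qed
    also have "\<dots> = \<theta> (clamp01 t)" by (rule \<Phi>_eq[OF \<theta> clamp01_in])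
    also have "\<dots> = \<theta> t"
    proof -
      have "\<theta> \<in> Cpaths" using \<theta> unfolding S_def by blast
      then show ?thesis using Cpaths_clamp by metis
    qed
    finally show ?thesis .
  qed
  define Q where "Q F B = {p \<in> space (borel :: ('a \<times> 'a) measure). \<forall>t\<in>F. (\<Phi>' t (fst p), snd p) \<in> B t}"
    for F :: "real set" and B :: "real \<Rightarrow> ('a \<times> 'a) set"
  have Q_meas: "Q F B \<in> sets borel" if "finite F" "\<And>t. t \<in> F \<Longrightarrow> B t \<in> sets borel" for F B
    unfolding Q_def
  proof (intro sets.sets_Collect_finite_All that(1))
    fix t assume t: "t \<in> F"
    have m: "(\<lambda>p :: 'a \<times> 'a. (\<Phi>' t (fst p), snd p)) \<in> borel_measurable borel"
      by (intro borel_measurable_Pair measurable_compose[OF borel_fst \<Phi>'_meas] borel_snd)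
    have "(\<lambda>p :: 'a \<times> 'a. (\<Phi>' t (fst p), snd p)) -` B t \<inter> space borel \<in> sets borel"
      by (rule measurable_sets[OF m that(2)[OF t]])
    moreover have "(\<lambda>p :: 'a \<times> 'a. (\<Phi>' t (fst p), snd p)) -` B t \<inter> space borel = {p \<in> space borel. (\<Phi>' t (fst p), snd p) \<in> B t}"
      by auto
    ultimately show "{p \<in> space borel. (\<Phi>' t (fst p), snd p) \<in> B t} \<in> sets borel" by simp
  qed
  have s\<eta>: "sets \<eta> = sets Cborel" "space \<eta> = Cpaths" using \<eta> by (auto simp: is_path_prob_def)
  have AES: "AE \<theta> in \<eta>. \<theta> \<in> S"
    using AE\<eta> AE_space[of \<eta>]
  proof eventually_elim
    case (elim \<theta>)
    then show ?case unfolding S_def using s\<eta>(2) by blast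
  qed
  have key: "emeasure \<Psi> (cyl F B) = emeasure (joint \<mu> \<psi>) (Q F B)"
    if pt: "parallel_transport \<mu> \<psi> \<eta> \<Psi>" and F: "finite F" and B: "\<And>t. t \<in> F \<Longrightarrow> B t \<in> sets borel" for \<Psi> F B
  proof -
    note b = pt_basic[OF pt]
    have p1m: "p1 \<in> measurable \<Psi> Cborel"
      using p1_measurable measurable_cong_sets[OF b(1) refl] by blast
    have ev0m: "ev 0 \<in> measurable \<Psi> borel"
      using ev_measurable measurable_cong_sets[OF b(1) refl] by blast
    have E: "distr \<Psi> Cborel p1 = \<eta>" using pt by (simp add: parallel_transport_def)
    have "AE x in distr \<Psi> Cborel p1. x \<in> S" unfolding E by (rule AES)
    then have "AE w in \<Psi>. p1 w \<in> S" by (rule AE_distrD[OF p1m])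
    then have AEeq: "AE w in \<Psi>. w \<in> cyl F B \<longleftrightarrow> w \<in> ev 0 -` Q F B \<inter> space \<Psi>"
      using pt_snd_const[OF pt] AE_space[of \<Psi>]
    proof eventually_elim
      case (elim w)
      have wt: "w t = (\<Phi>' t (fst (w 0)), snd (w 0))" for t
      proof -
        have "fst (w t) = p1 w t" by (simp add: p1_def)
        also have "\<dots> = \<Phi>' t (p1 w 0)" using \<Phi>'_eq[OF elim(1)] by simp
        also have "\<dots> = \<Phi>' t (fst (w 0))" by (simp add: p1_def)
        finally show ?thesis using elim(2) by (simp add: prod_eq_iff)
      qed
      have "(\<forall>t\<in>F. w t \<in> B t) \<longleftrightarrow> (\<forall>t\<in>F. (\<Phi>' t (fst (w 0)), snd (w 0)) \<in> B t)"
        by (simp only: wt[symmetric])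
      then show ?case using elim(3) b(2) by (auto simp: cyl_def Q_def ev_def)
    qed
    have "emeasure \<Psi> (cyl F B) = emeasure \<Psi> (ev 0 -` Q F B \<inter> space \<Psi>)"
    proof (rule emeasure_eq_AE[OF AEeq])
      show "cyl F B \<in> sets \<Psi>" using cyl_in_Cborel[OF F B] b(1) by simp
      show "ev 0 -` Q F B \<inter> space \<Psi> \<in> sets \<Psi>" by (rule measurable_sets[OF ev0m Q_meas[OF F B]])
    qed
    also have "\<dots> = emeasure (distr \<Psi> borel (ev 0)) (Q F B)"
      by (rule emeasure_distr[OF ev0m Q_meas[OF F B], symmetric])
    also have "\<dots> = emeasure (joint \<mu> \<psi>) (Q F B)" using pt by (simp add: parallel_transport_def)
    finally show ?thesis .
  qed
  show ?thesis
  proof (rule Cborel_measure_eqI)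
    show "sets \<Psi>1 = sets Cborel" "sets \<Psi>2 = sets Cborel" using pt_basic[OF pt1] pt_basic[OF pt2] by auto
    show "finite_measure \<Psi>1" using pt_basic(3)[OF pt1] unfolding prob_space_def by blast
    fix F :: "real set" and B :: "real \<Rightarrow> ('a \<times> 'a) set"
    assume "finite F" "\<And>t. t \<in> F \<Longrightarrow> B t \<in> sets borel"
    then show "emeasure \<Psi>1 (cyl F B) = emeasure \<Psi>2 (cyl F B)"
      using key[OF pt1] key[OF pt2] by simp
  qed
qed

theorem mainTheorem4:
  fixes \<mu> :: "'a::euclidean_space measure"
    and \<psi> :: "'a \<Rightarrow> 'a measure"
    and \<eta> :: "(real \<Rightarrow> 'a) measure"
  assumes "P2 \<mu>"
    and "\<psi> \<in> Tmu \<mu>"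
    and "is_path_prob \<eta>"
    and "distr \<eta> borel (ev 0) = \<mu>"
    and "(\<exists>v :: 'a \<Rightarrow> 'a. v \<in> borel_measurable borel \<and>
             (\<integral>\<^sup>+ x. ennreal ((norm (v x))\<^sup>2) \<partial>\<mu>) < \<infinity> \<and>
             (\<forall>x. \<psi> x = return borel (v x)))
       \<or> (\<exists>(f :: real \<Rightarrow> 'a \<Rightarrow> 'a) C L.
             (\<lambda>(t, x). f t x) \<in> borel_measurable borel \<and>
             (\<forall>t\<in>{0..1}. \<forall>x. norm (f t x) \<le> C) \<and>
             (\<forall>t\<in>{0..1}. L-lipschitz_on UNIV (f t)) \<and>
             (AE \<theta> in \<eta>. \<forall>t\<in>{0..1}.
                \<theta> t = \<theta> 0 + (\<integral>s\<in>{0..t}. f s (\<theta> s) \<partial>lborel)))"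
  shows "\<exists>!\<Psi>. parallel_transport \<mu> \<psi> \<eta> \<Psi>"
proof -
  have \<psi>m: "\<psi> \<in> measurable borel (prob_algebra borel)" using assms(2) by (simp add: Tmu_def)
  have ex: "parallel_transport \<mu> \<psi> \<eta> (\<eta> \<bind> (\<lambda>\<theta>. distr (\<psi> (\<theta> 0)) Cborel (pairpath \<theta>)))"
    by (rule existence[OF \<psi>m assms(3) assms(4)])
  have uniq: "\<Psi>1 = \<Psi>2" if pt1: "parallel_transport \<mu> \<psi> \<eta> \<Psi>1" and pt2: "parallel_transport \<mu> \<psi> \<eta> \<Psi>2" for \<Psi>1 \<Psi>2
    using assms(5)
  proof
    assume "\<exists>v :: 'a \<Rightarrow> 'a. v \<in> borel_measurable borel \<and>
             (\<integral>\<^sup>+ x. ennreal ((norm (v x))\<^sup>2) \<partial>\<mu>) < \<infinity> \<and> (\<forall>x. \<psi> x = return borel (v x))"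
    then obtain v :: "'a \<Rightarrow> 'a" where v: "v \<in> borel_measurable borel" "\<And>x. \<psi> x = return borel (v x)" by blast
    show "\<Psi>1 = \<Psi>2"
      using unique_case1[OF pt1 v(1) v(2) assms(4)] unique_case1[OF pt2 v(1) v(2) assms(4)] by simp
  next
    assume "\<exists>(f :: real \<Rightarrow> 'a \<Rightarrow> 'a) C L.
             (\<lambda>(t, x). f t x) \<in> borel_measurable borel \<and>
             (\<forall>t\<in>{0..1}. \<forall>x. norm (f t x) \<le> C) \<and>
             (\<forall>t\<in>{0..1}. L-lipschitz_on UNIV (f t)) \<and>
             (AE \<theta> in \<eta>. \<forall>t\<in>{0..1}. \<theta> t = \<theta> 0 + (\<integral>s\<in>{0..t}. f s (\<theta> s) \<partial>lborel))"
    then obtain f :: "real \<Rightarrow> 'a \<Rightarrow> 'a" and C L where f: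
      "(\<lambda>(t, x). f t x) \<in> borel_measurable borel"
      "\<forall>t\<in>{0..1}. \<forall>x. norm (f t x) \<le> C"
      "\<forall>t\<in>{0..1}. L-lipschitz_on UNIV (f t)"
      "AE \<theta> in \<eta>. \<forall>t\<in>{0..1}. \<theta> t = \<theta> 0 + (\<integral>s\<in>{0..t}. f s (\<theta> s) \<partial>lborel)"
      by blast
    show "\<Psi>1 = \<Psi>2" by (rule unique_case2[OF pt1 pt2 f assms(3)])
  qed
  show ?thesis using ex uniq by blast
qed

end
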